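(* Let $n \ge 1$ and $M = 2^m$ with $m \ge 1$ an integer (so $m = \log_2 M$). Let $\{(x^{(t)}, r^{(t)}) \in \mathbb{R}^n \times \{1,-1\} : t = 1, \ldots, M\}$ be training samples, let $\sigma = \max_{r,s}\|x^{(r)} - x^{(s)}\| / \sqrt{2M}$, and let $f : \mathbb{R}^n \to \mathbb{R}^M$ be the feature map $$f(x) = \left(e^{-\|x - x^{(1)}\|^2/(2\sigma^2)}, \ldots, e^{-\|x - x^{(M)}\|^2/(2\sigma^2)}\right).$$ For $\vec{\theta} = (\theta_1, \ldots, \theta_m) \in \mathbb{R}^m$ define the weight vector $$w(\vec{\theta}) = \bigotimes_{j=1}^m \begin{pmatrix} \cos\theta_j \\ \sin\theta_j \end{pmatrix} \in \mathbb{R}^M,$$ and the loss $$L(\vec{\theta}) = \frac{1}{2M} \sum_{t=1}^M \Big(f(x^{(t)}) \cdot w(\vec{\theta}) - r^{(t)}\Big)^2.$$ When minimizing $L(\vec{\theta})$ over $\vec\theta\in\mathbb{R}^m$: if the gradient descent method is used, each iteration step can be carried out at (classical arithmetic) cost $O(nM^2)$; if Newton's method is used, each iteration step can be carried out at cost $O\big(M^2(n + \log^2 M)\big)$.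
   Context: Costs are counted as the number of classical arithmetic operations. Equivalently to the tensor-product definition, writing $t = t_1 + t_2 2 + \cdots + t_m 2^{m-1}$ in binary for $t \in \{0, 1, \ldots, M-1\}$, the $t$-th entry of $w(\vec{\theta})$ is $\prod_{j=1}^m \cos(\theta_j - t_j\pi/2)$. A gradient descent step computes $\nabla L(\vec\theta)$ and updates $\vec\theta$; a Newton step computes $\nabla L(\vec\theta)$, the $m\times m$ Hessian $\nabla^2 L(\vec\theta)$, and solves with (inverts) the Hessian. Potential degeneracies (zero gradient, singular Hessian) are not considered. *)

theory Defs
  imports "HOL-Analysis.Analysis"
begin

text \<open>A straight-line program is a list of instructions; instruction number k
  produces value number k. Operands refer to earlier values by index (an
  out-of-range index reads 0). The cost of a program is its length, i.e. the
  number of arithmetic operations (input reads and constants are counted too).\<close>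

datatype instr =
    Inp nat | Const real
  | Add nat nat | Sub nat nat | Mul nat nat | Div nat nat | Max2 nat nat
  | Exp nat | Sin nat | Cos nat | Sqrt nat

definition val :: "real list \<Rightarrow> nat \<Rightarrow> real" where
  "val vs a = (if a < length vs then vs ! a else 0)"

fun step :: "(nat \<Rightarrow> real) \<Rightarrow> real list \<Rightarrow> instr \<Rightarrow> real" where
  "step inp vs (Inp k) = inp k"
| "step inp vs (Const c) = c"
| "step inp vs (Add a b) = val vs a + val vs b"
| "step inp vs (Sub a b) = val vs a - val vs b"
| "step inp vs (Mul a b) = val vs a * val vs b"
| "step inp vs (Div a b) = val vs a / val vs b"
| "step inp vs (Max2 a b) = max (val vs a) (val vs b)"
| "step inp vs (Exp a) = exp (val vs a)"
| "step inp vs (Sin a) = sin (val vs a)"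
| "step inp vs (Cos a) = cos (val vs a)"
| "step inp vs (Sqrt a) = sqrt (val vs a)"

fun exec :: "(nat \<Rightarrow> real) \<Rightarrow> real list \<Rightarrow> instr list \<Rightarrow> real list" where
  "exec inp vs [] = vs"
| "exec inp vs (i # is) = exec inp (vs @ [step inp vs i]) is"

definition run :: "instr list \<Rightarrow> nat list \<Rightarrow> (nat \<Rightarrow> real) \<Rightarrow> real list" where
  "run P outs inp = map (val (exec inp [] P)) outs"

text \<open>Input encoding (M = 2^m samples, 0-based): x t i (t<M, i<n) at position t*n+i,
  label r t at M*n+t, theta j at M*n+M+j, step size eta at M*n+M+m.\<close>
definition enc :: "nat \<Rightarrow> nat \<Rightarrow> (nat \<Rightarrow> nat \<Rightarrow> real) \<Rightarrow> (nat \<Rightarrow> real)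
    \<Rightarrow> (nat \<Rightarrow> real) \<Rightarrow> real \<Rightarrow> nat \<Rightarrow> real" where
  "enc n m x r \<theta> \<eta> k =
     (let M = 2 ^ m in
      if k < M * n then x (k div n) (k mod n)
      else if k < M * n + M then r (k - M * n)
      else if k < M * n + M + m then \<theta> (k - M * n - M)
      else if k = M * n + M + m then \<eta> else 0)"

definition dist2 :: "nat \<Rightarrow> (nat \<Rightarrow> nat \<Rightarrow> real) \<Rightarrow> nat \<Rightarrow> nat \<Rightarrow> real" where
  "dist2 n x t s = (\<Sum>i<n. (x t i - x s i)^2)"

definition sigma :: "nat \<Rightarrow> nat \<Rightarrow> (nat \<Rightarrow> nat \<Rightarrow> real) \<Rightarrow> real" where
  "sigma n m x = Max {sqrt (dist2 n x a b) | a b. a < 2^m \<and> b < 2^m} / sqrt (2 * 2^m)"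

definition feat :: "nat \<Rightarrow> nat \<Rightarrow> (nat \<Rightarrow> nat \<Rightarrow> real) \<Rightarrow> nat \<Rightarrow> nat \<Rightarrow> real" where
  "feat n m x t s = exp (- dist2 n x t s / (2 * (sigma n m x)^2))"

text \<open>t-th entry of the tensor-product weight vector w(theta), t < 2^m.\<close>
definition wvec :: "nat \<Rightarrow> (nat \<Rightarrow> real) \<Rightarrow> nat \<Rightarrow> real" where
  "wvec m \<theta> t = (\<Prod>j<m. cos (\<theta> j - (if odd (t div 2^j) then pi/2 else 0)))"

definition loss :: "nat \<Rightarrow> nat \<Rightarrow> (nat \<Rightarrow> nat \<Rightarrow> real) \<Rightarrow> (nat \<Rightarrow> real) \<Rightarrow> (nat \<Rightarrow> real) \<Rightarrow> real" where
  "loss n m x r \<theta> = 1 / (2 * 2^m) *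
     (\<Sum>t<2^m. ((\<Sum>s<2^m. feat n m x t s * wvec m \<theta> s) - r t)^2)"

definition gradL :: "nat \<Rightarrow> nat \<Rightarrow> (nat \<Rightarrow> nat \<Rightarrow> real) \<Rightarrow> (nat \<Rightarrow> real) \<Rightarrow> (nat \<Rightarrow> real) \<Rightarrow> nat \<Rightarrow> real" where
  "gradL n m x r \<theta> j = deriv (\<lambda>u. loss n m x r (\<theta>(j := u))) (\<theta> j)"

definition hessL :: "nat \<Rightarrow> nat \<Rightarrow> (nat \<Rightarrow> nat \<Rightarrow> real) \<Rightarrow> (nat \<Rightarrow> real) \<Rightarrow> (nat \<Rightarrow> real) \<Rightarrow> nat \<Rightarrow> nat \<Rightarrow> real" where
  "hessL n m x r \<theta> j k = deriv (\<lambda>u. gradL n m x r (\<theta>(j := u)) k) (\<theta> j)"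

end

theory Submission
  imports Defs
begin


type_synonym fn = "(nat \<Rightarrow> real) \<Rightarrow> real"

lemma exec_append: "exec inp vs (P @ Q) = exec inp (exec inp vs P) Q"
  by (induction P arbitrary: vs) auto

lemma exec_length: "length (exec inp vs P) = length vs + length P"
  by (induction P arbitrary: vs) auto

lemma exec_snoc: "exec inp [] (P @ [ins]) = exec inp [] P @ [step inp (exec inp [] P) ins]"
  by (simp add: exec_append)

definition computes :: "instr list \<Rightarrow> fn \<Rightarrow> bool" where
  "computes P f \<longleftrightarrow> (\<exists>i<length P. \<forall>inp. val (exec inp [] P) i = f inp)"

definition slp :: "nat \<Rightarrow> fn set \<Rightarrow> bool" where
  "slp c S \<longleftrightarrow> (\<exists>P. length P \<le> c \<and> (\<forall>f\<in>S. computes P f))"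

lemma computes_snoc: "computes P f \<Longrightarrow> computes (P @ [ins]) f"
  unfolding computes_def
  by (auto simp: exec_snoc val_def exec_length nth_append) (metis less_SucI)

lemma slp_step:
  assumes "slp c S"
    and "\<And>P. (\<forall>f\<in>S. computes P f) \<Longrightarrow> \<exists>ins. \<forall>inp. step inp (exec inp [] P) ins = h inp"
  shows "slp (Suc c) (insert h S)"
proof -
  obtain P where P: "length P \<le> c" "\<forall>f\<in>S. computes P f" using assms(1) slp_def by auto
  obtain ins where ins: "\<forall>inp. step inp (exec inp [] P) ins = h inp" using assms(2) P(2) by blast
  have "computes (P @ [ins]) h"
    unfolding computes_def
    by (rule exI[of _ "length P"]) (auto simp: exec_snoc val_def exec_length ins nth_append)
  moreover have "\<forall>f\<in>S. computes (P @ [ins]) f" using P(2) computes_snoc by blast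
  ultimately show ?thesis unfolding slp_def using P(1)
    by (intro exI[of _ "P @ [ins]"]) auto
qed

lemma computes_idx: "computes P f \<Longrightarrow> \<exists>i. \<forall>inp. val (exec inp [] P) i = f inp"
  unfolding computes_def by blast

lemma slp_mono: "slp c S \<Longrightarrow> c \<le> c' \<Longrightarrow> S' \<subseteq> S \<Longrightarrow> slp c' S'"
  unfolding slp_def by (meson order.trans subsetD)

lemma slp_empty: "slp 0 {}"
  unfolding slp_def by auto

definition ext :: "nat \<Rightarrow> fn set \<Rightarrow> fn set \<Rightarrow> bool" where
  "ext k S T \<longleftrightarrow> (\<forall>c S'. S \<subseteq> S' \<longrightarrow> slp c S' \<longrightarrow> slp (c + k) (S' \<union> T))"

lemma ext_mono: "ext k S T \<Longrightarrow> k \<le> k' \<Longrightarrow> S \<subseteq> S2 \<Longrightarrow> T2 \<subseteq> T \<Longrightarrow> ext k' S2 T2"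
  unfolding ext_def
proof (intro allI impI)
  fix c S' assume h: "\<forall>c S'. S \<subseteq> S' \<longrightarrow> slp c S' \<longrightarrow> slp (c + k) (S' \<union> T)" "k \<le> k'" "S \<subseteq> S2" "T2 \<subseteq> T" "S2 \<subseteq> S'" "slp c S'"
  then have "slp (c + k) (S' \<union> T)" by blast
  then show "slp (c + k') (S' \<union> T2)" by (rule slp_mono) (use h in auto)
qed

lemma ext_trans: "ext k1 S T1 \<Longrightarrow> ext k2 (S \<union> T1) T2 \<Longrightarrow> ext (k1 + k2) S (T1 \<union> T2)"
  unfolding ext_def
proof (intro allI impI)
  fix c S' assume h1: "\<forall>c S'. S \<subseteq> S' \<longrightarrow> slp c S' \<longrightarrow> slp (c + k1) (S' \<union> T1)"
    and h2: "\<forall>c S'. S \<union> T1 \<subseteq> S' \<longrightarrow> slp c S' \<longrightarrow> slp (c + k2) (S' \<union> T2)"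
    and s: "S \<subseteq> S'" "slp c S'"
  have "slp (c + k1) (S' \<union> T1)" using h1 s by blast
  moreover have "S \<union> T1 \<subseteq> S' \<union> T1" using s by blast
  ultimately have "slp (c + k1 + k2) (S' \<union> T1 \<union> T2)" using h2 by blast
  then show "slp (c + (k1 + k2)) (S' \<union> (T1 \<union> T2))" by (simp add: add.assoc Un_assoc)
qed

lemma ext_trans': "ext k1 S T1 \<Longrightarrow> ext k2 (S \<union> T1) T2 \<Longrightarrow> k1 + k2 \<le> k \<Longrightarrow> ext k S T2"
  by (rule ext_mono[OF ext_trans]) auto

lemma ext_chain: "ext k1 S T1 \<Longrightarrow> ext k2 S2 T2 \<Longrightarrow> S2 \<subseteq> S \<union> T1 \<Longrightarrow> T \<subseteq> T1 \<union> T2 \<Longrightarrow> k1 + k2 \<le> k \<Longrightarrow> ext k S T"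
  by (rule ext_mono[OF ext_trans[OF _ ext_mono]]) auto

lemma ext_zero: "T \<subseteq> S \<Longrightarrow> ext k S T"
  unfolding ext_def
proof (intro allI impI)
  fix c S' assume "T \<subseteq> S" "S \<subseteq> S'" "slp c S'"
  then show "slp (c + k) (S' \<union> T)" by (rule_tac slp_mono) auto
qed

lemma ext_empty: "ext k S {}"
  by (rule ext_zero) auto

lemma ext_union: "ext k1 S T1 \<Longrightarrow> ext k2 S T2 \<Longrightarrow> ext (k1 + k2) S (T1 \<union> T2)"
  by (erule ext_trans) (erule ext_mono, auto)

lemma ext_apply: "slp c S \<Longrightarrow> ext k S T \<Longrightarrow> slp (c + k) (S \<union> T)"
  unfolding ext_def by auto

lemma ext_step:
  assumes "\<And>P. (\<forall>f\<in>S. computes P f) \<Longrightarrow> \<exists>ins. \<forall>inp. step inp (exec inp [] P) ins = h inp"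
  shows "ext 1 S {h}"
  unfolding ext_def
proof (intro allI impI)
  fix c S' assume "S \<subseteq> S'" "slp c S'"
  then have "slp (Suc c) (insert h S')"
    by (intro slp_step) (use assms in blast)+
  then show "slp (c + 1) (S' \<union> {h})" by simp
qed

lemma ext_inp: "ext 1 S {\<lambda>inp. inp k}"
  by (rule ext_step) (auto intro: exI[of _ "Inp k"])

lemma ext_const: "ext 1 S {\<lambda>inp. c}"
  by (rule ext_step) (auto intro: exI[of _ "Const c"])

lemma ext_bin:
  assumes "f \<in> S" "g \<in> S"
    and "\<And>a b. \<exists>ins. \<forall>vs inp. step inp vs ins = op (val vs a) (val vs b)"
  shows "ext 1 S {\<lambda>inp. op (f inp) (g inp)}"
proof (rule ext_step)
  fix P assume "\<forall>f\<in>S. computes P f"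
  then obtain a b where a: "\<forall>inp. val (exec inp [] P) a = f inp" and b: "\<forall>inp. val (exec inp [] P) b = g inp"
    using assms computes_idx by meson
  obtain ins where i: "\<forall>vs inp. step inp vs ins = op (val vs a) (val vs b)" using assms(3) by blast
  show "\<exists>ins. \<forall>inp. step inp (exec inp [] P) ins = op (f inp) (g inp)"
    by (rule exI[of _ ins]) (simp add: i a b)
qed

lemma ext_un:
  assumes "f \<in> S"
    and "\<And>a. \<exists>ins. \<forall>vs inp. step inp vs ins = op (val vs a)"
  shows "ext 1 S {\<lambda>inp. op (f inp)}"
proof (rule ext_step)
  fix P assume "\<forall>f\<in>S. computes P f"
  then obtain a where a: "\<forall>inp. val (exec inp [] P) a = f inp"
    using assms computes_idx by meson
  obtain ins where i: "\<forall>vs inp. step inp vs ins = op (val vs a)" using assms(2) by blast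
  show "\<exists>ins. \<forall>inp. step inp (exec inp [] P) ins = op (f inp)"
    by (rule exI[of _ ins]) (simp add: i a)
qed

lemma ext_add: "f \<in> S \<Longrightarrow> g \<in> S \<Longrightarrow> ext 1 S {\<lambda>inp. f inp + g inp}"
  by (rule ext_bin[where op="(+)"]) (auto intro: exI[of _ "Add _ _"])
lemma ext_sub: "f \<in> S \<Longrightarrow> g \<in> S \<Longrightarrow> ext 1 S {\<lambda>inp. f inp - g inp}"
  by (rule ext_bin[where op="(-)"]) (auto intro: exI[of _ "Sub _ _"])
lemma ext_mul: "f \<in> S \<Longrightarrow> g \<in> S \<Longrightarrow> ext 1 S {\<lambda>inp. f inp * g inp}"
  by (rule ext_bin[where op="(*)"]) (auto intro: exI[of _ "Mul _ _"])
lemma ext_div: "f \<in> S \<Longrightarrow> g \<in> S \<Longrightarrow> ext 1 S {\<lambda>inp. f inp / g inp}"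
  by (rule ext_bin[where op="(/)"]) (auto intro: exI[of _ "Div _ _"])
lemma ext_max: "f \<in> S \<Longrightarrow> g \<in> S \<Longrightarrow> ext 1 S {\<lambda>inp. max (f inp) (g inp)}"
  by (rule ext_bin[where op="max"]) (auto intro: exI[of _ "Max2 _ _"])
lemma ext_exp: "f \<in> S \<Longrightarrow> ext 1 S {\<lambda>inp. exp (f inp)}"
  by (rule ext_un[where op="exp"]) (auto intro: exI[of _ "Exp _"])
lemma ext_cos: "f \<in> S \<Longrightarrow> ext 1 S {\<lambda>inp. cos (f inp)}"
  by (rule ext_un[where op="cos"]) (auto intro: exI[of _ "Cos _"])
lemma ext_sqrt: "f \<in> S \<Longrightarrow> ext 1 S {\<lambda>inp. sqrt (f inp)}"
  by (rule ext_un[where op="sqrt"]) (auto intro: exI[of _ "Sqrt _"])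

lemma ext_loop:
  assumes "finite A" "\<And>a. a \<in> A \<Longrightarrow> ext k S (T a)"
  shows "ext (card A * k) S (\<Union>a\<in>A. T a)"
  using assms
proof (induction A rule: finite_induct)
  case empty
  then show ?case by (simp add: ext_empty)
next
  case (insert a F)
  have 1: "ext (card F * k) S (\<Union>a\<in>F. T a)" using insert by auto
  have 2: "ext k (S \<union> (\<Union>a\<in>F. T a)) (T a)"
    by (rule ext_mono[OF insert.prems[of a]]) auto
  have "ext (card F * k + k) S ((\<Union>a\<in>F. T a) \<union> T a)" by (rule ext_trans[OF 1 2])
  then show ?case using insert by (simp add: Un_commute add.commute)
qed

lemma ext_sum:
  assumes "\<And>i. i < N \<Longrightarrow> f i \<in> S"
  shows "ext (Suc N) S {\<lambda>inp. \<Sum>i<N. f i inp}"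
  using assms
proof (induction N)
  case 0
  then show ?case using ext_const[of S 0] by simp
next
  case (Suc N)
  have 1: "ext (Suc N) S {\<lambda>inp. \<Sum>i<N. f i inp}" using Suc by auto
  have 2: "ext 1 (S \<union> {\<lambda>inp. \<Sum>i<N. f i inp}) {\<lambda>inp. (\<Sum>i<N. f i inp) + f N inp}"
    using ext_add[of "\<lambda>inp. \<Sum>i<N. f i inp" "S \<union> {\<lambda>inp. \<Sum>i<N. f i inp}" "f N"] Suc.prems by auto
  have e: "(\<lambda>inp. \<Sum>i<Suc N. f i inp) = (\<lambda>inp. (\<Sum>i<N. f i inp) + f N inp)" by auto
  show ?case unfolding e by (rule ext_trans'[OF 1 2]) auto
qed

lemma ext_prod:
  assumes "\<And>i. i < N \<Longrightarrow> f i \<in> S"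
  shows "ext (Suc N) S {\<lambda>inp. \<Prod>i<N. f i inp}"
  using assms
proof (induction N)
  case 0
  then show ?case using ext_const[of S 1] by simp
next
  case (Suc N)
  have 1: "ext (Suc N) S {\<lambda>inp. \<Prod>i<N. f i inp}" using Suc by auto
  have 2: "ext 1 (S \<union> {\<lambda>inp. \<Prod>i<N. f i inp}) {\<lambda>inp. (\<Prod>i<N. f i inp) * f N inp}"
    using ext_mul[of "\<lambda>inp. \<Prod>i<N. f i inp" "S \<union> {\<lambda>inp. \<Prod>i<N. f i inp}" "f N"] Suc.prems by auto
  have e: "(\<lambda>inp. \<Prod>i<Suc N. f i inp) = (\<lambda>inp. (\<Prod>i<N. f i inp) * f N inp)" by auto
  show ?case unfolding e by (rule ext_trans'[OF 1 2]) auto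
qed

lemma ext_Max:
  assumes "N \<ge> 1" "\<And>i. i < N \<Longrightarrow> f i \<in> S"
  shows "ext N S {\<lambda>inp. Max ((\<lambda>i. f i inp) ` {..<N})}"
  using assms
proof (induction N rule: nat_induct_at_least)
  case base
  have "(\<lambda>inp. Max ((\<lambda>i. f i inp) ` {..<1})) = f 0" by (auto simp: lessThan_Suc)
  then show ?case using base by (auto intro!: ext_zero)
next
  case (Suc N)
  have 1: "ext N S {\<lambda>inp. Max ((\<lambda>i. f i inp) ` {..<N})}" using Suc by auto
  have 2: "ext 1 (S \<union> {\<lambda>inp. Max ((\<lambda>i. f i inp) ` {..<N})}) {\<lambda>inp. max (f N inp) (Max ((\<lambda>i. f i inp) ` {..<N}))}"
    using ext_max[of "f N" "S \<union> {\<lambda>inp. Max ((\<lambda>i. f i inp) ` {..<N})}" "\<lambda>inp. Max ((\<lambda>i. f i inp) ` {..<N})"] Suc.prems by auto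
  have e: "(\<lambda>inp. Max ((\<lambda>i. f i inp) ` {..<Suc N})) = (\<lambda>inp. max (f N inp) (Max ((\<lambda>i. f i inp) ` {..<N})))"
  proof
    fix inp show "Max ((\<lambda>i. f i inp) ` {..<Suc N}) = max (f N inp) (Max ((\<lambda>i. f i inp) ` {..<N}))"
      unfolding lessThan_Suc image_insert using Suc.hyps by (subst Max_insert) (auto simp: lessThan_empty_iff)
  qed
  show ?case unfolding e by (rule ext_trans'[OF 1 2]) auto
qed


definition cc :: "nat \<Rightarrow> nat \<Rightarrow> real" where
  "cc i s = (if odd (s div 2^i) then pi/2 else 0)"

definition wd :: "nat \<Rightarrow> (nat \<Rightarrow> real) \<Rightarrow> (nat \<Rightarrow> nat) \<Rightarrow> nat \<Rightarrow> real" where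
  "wd m \<theta> E s = (\<Prod>i<m. cos (\<theta> i - cc i s + real (E i) * pi / 2))"

lemma wvec_wd: "wvec m \<theta> s = wd m \<theta> (\<lambda>_. 0) s"
  unfolding wvec_def wd_def cc_def by simp

lemma wd_split:
  assumes "j < m"
  shows "wd m (\<theta>(j:=v)) E s = cos (v - cc j s + real (E j) * pi / 2) *
     (\<Prod>i\<in>{..<m}-{j}. cos (\<theta> i - cc i s + real (E i) * pi / 2))"
proof -
  have "wd m (\<theta>(j:=v)) E s = cos (v - cc j s + real (E j) * pi / 2) *
     (\<Prod>i\<in>{..<m}-{j}. cos ((\<theta>(j:=v)) i - cc i s + real (E i) * pi / 2))"
    unfolding wd_def using assms by (subst prod.remove[of _ j]) auto
  also have "(\<Prod>i\<in>{..<m}-{j}. cos ((\<theta>(j:=v)) i - cc i s + real (E i) * pi / 2)) =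
      (\<Prod>i\<in>{..<m}-{j}. cos (\<theta> i - cc i s + real (E i) * pi / 2))"
    by (rule prod.cong) auto
  finally show ?thesis .
qed

lemma wd_deriv:
  assumes "j < m"
  shows "((\<lambda>u. wd m (\<theta>(j:=u)) E s) has_real_derivative wd m (\<theta>(j:=u)) (E(j := Suc (E j))) s) (at u)"
proof -
  define P0 where "P0 = (\<Prod>i\<in>{..<m}-{j}. cos (\<theta> i - cc i s + real (E i) * pi / 2))"
  have P0': "(\<Prod>i\<in>{..<m}-{j}. cos (\<theta> i - cc i s + real ((E(j := Suc (E j))) i) * pi / 2)) = P0"
    unfolding P0_def by (rule prod.cong) auto
  have e1: "(\<lambda>u. wd m (\<theta>(j:=u)) E s) = (\<lambda>u. cos (u - cc j s + real (E j) * pi / 2) * P0)"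
    using wd_split[OF assms] P0_def by auto
  have e2: "wd m (\<theta>(j:=u)) (E(j := Suc (E j))) s = cos (u - cc j s + real (E j) * pi / 2 + pi/2) * P0"
    using wd_split[OF assms, of \<theta> u "E(j := Suc (E j))" s] P0'
    by (simp add: algebra_simps add_divide_distrib)
  have "((\<lambda>u. cos (u - cc j s + real (E j) * pi / 2) * P0) has_real_derivative
     (- sin (u - cc j s + real (E j) * pi / 2) * 1) * P0) (at u)"
    by (auto intro!: derivative_eq_intros)
  then show ?thesis unfolding e1 e2 minus_sin_cos_eq by simp
qed

definition gs :: "nat \<Rightarrow> nat \<Rightarrow> (nat \<Rightarrow> nat \<Rightarrow> real) \<Rightarrow> (nat \<Rightarrow> real) \<Rightarrow> (nat \<Rightarrow> nat) \<Rightarrow> nat \<Rightarrow> real" where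
  "gs n m x \<theta> E t = (\<Sum>s<2^m. feat n m x t s * wd m \<theta> E s)"

definition yv :: "nat \<Rightarrow> nat \<Rightarrow> (nat \<Rightarrow> nat \<Rightarrow> real) \<Rightarrow> (nat \<Rightarrow> real) \<Rightarrow> (nat \<Rightarrow> real) \<Rightarrow> nat \<Rightarrow> real" where
  "yv n m x r \<theta> t = gs n m x \<theta> (\<lambda>_. 0) t - r t"

definition ee :: "nat \<Rightarrow> nat \<Rightarrow> nat" where
  "ee j = (\<lambda>_. 0)(j := Suc 0)"

definition Gr :: "nat \<Rightarrow> nat \<Rightarrow> (nat \<Rightarrow> nat \<Rightarrow> real) \<Rightarrow> (nat \<Rightarrow> real) \<Rightarrow> (nat \<Rightarrow> real) \<Rightarrow> nat \<Rightarrow> real" where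
  "Gr n m x r \<theta> j = 1 / 2^m * (\<Sum>t<2^m. yv n m x r \<theta> t * gs n m x \<theta> (ee j) t)"

definition Hs :: "nat \<Rightarrow> nat \<Rightarrow> (nat \<Rightarrow> nat \<Rightarrow> real) \<Rightarrow> (nat \<Rightarrow> real) \<Rightarrow> (nat \<Rightarrow> real) \<Rightarrow> nat \<Rightarrow> nat \<Rightarrow> real" where
  "Hs n m x r \<theta> j k = 1 / 2^m * (\<Sum>t<2^m. gs n m x \<theta> (ee j) t * gs n m x \<theta> (ee k) t
      + yv n m x r \<theta> t * gs n m x \<theta> ((ee k)(j := Suc (ee k j))) t)"

lemma loss_yv: "loss n m x r \<theta> = 1 / (2 * 2^m) * (\<Sum>t<2^m. (yv n m x r \<theta> t)^2)"
  unfolding loss_def yv_def gs_def wvec_wd ..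

lemma gs_deriv:
  assumes "j < m"
  shows "((\<lambda>u. gs n m x (\<theta>(j:=u)) E t) has_real_derivative gs n m x (\<theta>(j:=u)) (E(j := Suc (E j))) t) (at u)"
  unfolding gs_def
  by (auto intro!: DERIV_sum DERIV_cmult wd_deriv assms)

lemma yv_deriv:
  assumes "j < m"
  shows "((\<lambda>u. yv n m x r (\<theta>(j:=u)) t) has_real_derivative gs n m x (\<theta>(j:=u)) (ee j) t) (at u)"
proof -
  have "((\<lambda>u. gs n m x (\<theta>(j:=u)) (\<lambda>_. 0) t - r t) has_real_derivative gs n m x (\<theta>(j:=u)) ((\<lambda>_. 0)(j := Suc 0)) t - 0) (at u)"
    using gs_deriv[OF assms, of n x \<theta> "\<lambda>_. 0" t u] by (auto intro!: derivative_eq_intros)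
  then show ?thesis unfolding yv_def ee_def by simp
qed

lemma loss_deriv:
  assumes "j < m"
  shows "((\<lambda>u. loss n m x r (\<theta>(j:=u))) has_real_derivative Gr n m x r (\<theta>(j:=u)) j) (at u)"
proof -
  have "((\<lambda>u. 1 / (2 * 2^m) * (\<Sum>t<2^m. (yv n m x r (\<theta>(j:=u)) t)^2)) has_real_derivative
      1 / (2 * 2^m) * (\<Sum>t<2^m. 2 * yv n m x r (\<theta>(j:=u)) t * gs n m x (\<theta>(j:=u)) (ee j) t)) (at u)"
    apply (rule DERIV_cmult)
    apply (rule DERIV_sum)
    subgoal for t
      using DERIV_power[OF yv_deriv[OF assms, of n x r \<theta> t u], of 2] by (simp add: algebra_simps)
    done
  moreover have "1 / (2 * 2^m) * (\<Sum>t<2^m. 2 * yv n m x r (\<theta>(j:=u)) t * gs n m x (\<theta>(j:=u)) (ee j) t)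
     = Gr n m x r (\<theta>(j:=u)) j"
    unfolding Gr_def by (simp add: sum_distrib_left mult.assoc)
  ultimately show ?thesis unfolding loss_yv by simp
qed

lemma gradL_eq:
  assumes "j < m"
  shows "gradL n m x r \<theta> j = Gr n m x r \<theta> j"
  unfolding gradL_def using DERIV_imp_deriv[OF loss_deriv[OF assms, of n x r \<theta> "\<theta> j"]] by simp

lemma Gr_deriv:
  assumes "j < m"
  shows "((\<lambda>u. Gr n m x r (\<theta>(j:=u)) k) has_real_derivative Hs n m x r (\<theta>(j:=u)) j k) (at u)"
  unfolding Gr_def Hs_def
  apply (rule DERIV_cmult)
  apply (rule DERIV_sum)
  apply (rule DERIV_mult[OF yv_deriv[OF assms] gs_deriv[OF assms], THEN DERIV_cong])
  apply (simp add: mult.commute)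
  done

lemma hessL_eq:
  assumes "j < m" "k < m"
  shows "hessL n m x r \<theta> j k = Hs n m x r \<theta> j k"
proof -
  have "(\<lambda>u. gradL n m x r (\<theta>(j := u)) k) = (\<lambda>u. Gr n m x r (\<theta>(j:=u)) k)"
    using gradL_eq[OF assms(2)] by auto
  then show ?thesis
    unfolding hessL_def using DERIV_imp_deriv[OF Gr_deriv[OF assms(1), of n x r \<theta> k "\<theta> j"]] by simp
qed


definition xv :: "nat \<Rightarrow> (nat \<Rightarrow> real) \<Rightarrow> nat \<Rightarrow> nat \<Rightarrow> real" where
  "xv n inp = (\<lambda>t i. inp (t*n+i))"
definition rv :: "nat \<Rightarrow> nat \<Rightarrow> (nat \<Rightarrow> real) \<Rightarrow> nat \<Rightarrow> real" where
  "rv n m inp = (\<lambda>t. inp (2^m*n+t))"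
definition tv :: "nat \<Rightarrow> nat \<Rightarrow> (nat \<Rightarrow> real) \<Rightarrow> nat \<Rightarrow> real" where
  "tv n m inp = (\<lambda>j. inp (2^m*n+2^m+j))"
definition etv :: "nat \<Rightarrow> nat \<Rightarrow> (nat \<Rightarrow> real) \<Rightarrow> real" where
  "etv n m inp = inp (2^m*n+2^m+m)"

definition "Xf n t i = (\<lambda>inp::nat\<Rightarrow>real. inp (t*n+i))"
definition "Rf n m t = (\<lambda>inp::nat\<Rightarrow>real. inp (2^m*n+t))"
definition "Tf n m j = (\<lambda>inp::nat\<Rightarrow>real. inp (2^m*n+2^m+j))"
definition "Ef n m = (\<lambda>inp::nat\<Rightarrow>real. inp (2^m*n+2^m+m))"
definition "Dist n t s = (\<lambda>inp. dist2 n (xv n inp) t s)"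
definition "Sq n t s = (\<lambda>inp. sqrt (dist2 n (xv n inp) t s))"
definition "Den n m = (\<lambda>inp. 2 * (sigma n m (xv n inp) * sigma n m (xv n inp)))"
definition "Fe n m t s = (\<lambda>inp. feat n m (xv n inp) t s)"
definition "Phi n m e i s = (\<lambda>inp. cos (tv n m inp i - cc i s + real e * pi / 2))"
definition "Wf n m E s = (\<lambda>inp. wd m (tv n m inp) E s)"
definition "GSf n m E t = (\<lambda>inp. gs n m (xv n inp) (tv n m inp) E t)"
definition "Yf n m t = (\<lambda>inp. yv n m (xv n inp) (rv n m inp) (tv n m inp) t)"
definition "Zf n m s = (\<lambda>inp. \<Sum>t<2^m. yv n m (xv n inp) (rv n m inp) (tv n m inp) t * feat n m (xv n inp) t s)"
definition "Gf n m j = (\<lambda>inp. Gr n m (xv n inp) (rv n m inp) (tv n m inp) j)"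
definition "Out1 n m j = (\<lambda>inp. tv n m inp j - etv n m inp * Gr n m (xv n inp) (rv n m inp) (tv n m inp) j)"
definition "Hf n m j k = (\<lambda>inp. Hs n m (xv n inp) (rv n m inp) (tv n m inp) j k)"

lemma ext_X: "ext 1 S {Xf n t i}" unfolding Xf_def by (rule ext_inp)
lemma ext_R: "ext 1 S {Rf n m t}" unfolding Rf_def by (rule ext_inp)
lemma ext_T: "ext 1 S {Tf n m t}" unfolding Tf_def by (rule ext_inp)
lemma ext_E: "ext 1 S {Ef n m}" unfolding Ef_def by (rule ext_inp)

lemma ext_seq: "ext k1 S {f} \<Longrightarrow> ext k2 (S \<union> {f}) {g} \<Longrightarrow> ext (k1 + k2) S {g}"
  by (rule ext_trans') auto

lemma ext_Dist:
  assumes "\<And>i. i < n \<Longrightarrow> Xf n t i \<in> S" "\<And>i. i < n \<Longrightarrow> Xf n s i \<in> S"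
  shows "ext (3*n+1) S {Dist n t s}"
proof -
  define D where "D i = (\<lambda>inp::nat\<Rightarrow>real. (Xf n t i inp - Xf n s i inp) * (Xf n t i inp - Xf n s i inp))" for i
  have 1: "ext 2 S {D i}" if "i < n" for i
  proof -
    have a: "ext 1 S {\<lambda>inp. Xf n t i inp - Xf n s i inp}" using assms that by (intro ext_sub) auto
    have b: "ext 1 (S \<union> {\<lambda>inp. Xf n t i inp - Xf n s i inp}) {D i}"
      unfolding D_def by (rule ext_mul) auto
    show ?thesis using ext_seq[OF a b] by (simp add: numeral_2_eq_2)
  qed
  have 2: "ext (card {..<n} * 2) S (\<Union>i\<in>{..<n}. {D i})" by (rule ext_loop) (use 1 in auto)
  have 3: "ext (Suc n) (S \<union> (\<Union>i\<in>{..<n}. {D i})) {\<lambda>inp. \<Sum>i<n. D i inp}"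
    by (rule ext_sum) auto
  have e: "(\<lambda>inp. \<Sum>i<n. D i inp) = Dist n t s"
    unfolding D_def Dist_def dist2_def Xf_def xv_def by (simp add: power2_eq_square)
  show ?thesis using ext_trans'[OF 2 3] e by simp
qed

lemma ext_Sq: "Dist n t s \<in> S \<Longrightarrow> ext 1 S {Sq n t s}"
  unfolding Sq_def using ext_sqrt[of "Dist n t s" S] by (simp add: Dist_def)

lemma Max_pairs:
  assumes "(M::nat) > 0"
  shows "{g a b | a b. a < M \<and> b < M} = (\<lambda>p. g (p div M) (p mod M)) ` {..<M*M}"
proof (intro set_eqI iffI)
  fix z assume "z \<in> {g a b | a b. a < M \<and> b < M}"
  then obtain a b where z: "z = g a b" "a < M" "b < M" by blast
  have "a * M + b < a * M + M" using z by simp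
  also have "\<dots> = Suc a * M" by simp
  also have "\<dots> \<le> M * M" using z(2) by (intro mult_right_mono) auto
  finally have "a * M + b < M * M" .
  moreover have "(a*M+b) div M = a" using z(3) by simp
  moreover have "(a*M+b) mod M = b" using z(3) by simp
  ultimately show "z \<in> (\<lambda>p. g (p div M) (p mod M)) ` {..<M*M}" using z(1)
    by (intro image_eqI[where x="a*M+b"]) auto
next
  fix z assume "z \<in> (\<lambda>p. g (p div M) (p mod M)) ` {..<M*M}"
  then obtain p where p: "z = g (p div M) (p mod M)" "p < M*M" by blast
  have "p div M < M" using p(2) by (metis div_less_iff_less_mult mult.commute assms)
  moreover have "p mod M < M" using assms by simp
  ultimately show "z \<in> {g a b | a b. a < M \<and> b < M}" using p(1) by blast
qed

lemma ext_Den: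
  assumes "\<And>t s. t < 2^m \<Longrightarrow> s < 2^m \<Longrightarrow> Sq n t s \<in> S"
  shows "ext (2^m*2^m + 5) S {Den n m}"
proof -
  define M :: nat where "M = 2^m"
  have M0: "M > 0" unfolding M_def by simp
  define Mx where "Mx = (\<lambda>inp. Max ((\<lambda>p. Sq n (p div M) (p mod M) inp) ` {..<M*M}))"
  have 1: "ext (M*M) S {Mx}" unfolding Mx_def
    by (rule ext_Max) (use M0 assms M_def in \<open>auto simp: less_mult_imp_div_less\<close>)
  have 2: "ext 1 {} {\<lambda>inp. sqrt (2 * 2^m)}" by (rule ext_const)
  have 3: "ext 1 {Mx, \<lambda>inp. sqrt (2 * 2^m)} {\<lambda>inp. Mx inp / sqrt (2 * 2^m)}" by (rule ext_div) auto
  have sig: "(\<lambda>inp. Mx inp / sqrt (2 * 2^m)) = (\<lambda>inp. sigma n m (xv n inp))"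
  proof
    fix inp
    have "{sqrt (dist2 n (xv n inp) a b) | a b. a < 2^m \<and> b < 2^m} = (\<lambda>p. Sq n (p div M) (p mod M) inp) ` {..<M*M}"
      unfolding Sq_def M_def using Max_pairs[of "2^m" "\<lambda>a b. sqrt (dist2 n (xv n inp) a b)"] by simp
    then show "Mx inp / sqrt (2 * 2^m) = sigma n m (xv n inp)"
      unfolding sigma_def Mx_def by simp
  qed
  define Sg where "Sg = (\<lambda>inp. sigma n m (xv n inp))"
  have 4: "ext 1 {Sg} {\<lambda>inp. Sg inp * Sg inp}" by (rule ext_mul) auto
  have 5: "ext 1 {} {\<lambda>inp. 2}" by (rule ext_const)
  have 6: "ext 1 {\<lambda>inp. 2, \<lambda>inp. Sg inp * Sg inp} {\<lambda>inp. 2 * (Sg inp * Sg inp)}" by (rule ext_mul) auto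
  have a: "ext (M*M + 1) S {Mx, \<lambda>inp. sqrt (2 * 2^m)}" by (rule ext_chain[OF 1 2]) auto
  have b: "ext (M*M + 2) S {Sg}" using sig Sg_def by (intro ext_chain[OF a 3]) auto
  have c: "ext (M*M + 3) S {Sg, \<lambda>inp. Sg inp * Sg inp}" by (rule ext_chain[OF b 4]) auto
  have d: "ext (M*M + 4) S {\<lambda>inp. 2, \<lambda>inp. Sg inp * Sg inp}" by (rule ext_chain[OF c 5]) auto
  have e: "ext (M*M + 5) S {\<lambda>inp. 2 * (Sg inp * Sg inp)}" by (rule ext_chain[OF d 6]) auto
  from e show ?thesis unfolding Den_def Sg_def M_def by (simp add: add.assoc)
qed

lemma ext_sum_of:
  assumes "\<And>i. i < N \<Longrightarrow> ext k S {f i}"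
  shows "ext (N*k + Suc N) S {\<lambda>inp. \<Sum>i<N. f i inp}"
proof -
  have 1: "ext (card {..<N} * k) S (\<Union>i\<in>{..<N}. {f i})" by (rule ext_loop) (use assms in auto)
  have 2: "ext (Suc N) (\<Union>i\<in>{..<N}. {f i}) {\<lambda>inp. \<Sum>i<N. f i inp}" by (rule ext_sum) auto
  show ?thesis by (rule ext_chain[OF 1 2]) auto
qed

lemma ext_Fe:
  assumes "Dist n t s \<in> S" "Den n m \<in> S"
  shows "ext 4 S {Fe n m t s}"
proof -
  have 1: "ext 1 S {\<lambda>inp. 0}" by (rule ext_const)
  have 2: "ext 1 {\<lambda>inp. 0, Dist n t s} {\<lambda>inp. 0 - Dist n t s inp}" by (rule ext_sub) auto
  have 3: "ext 1 {\<lambda>inp. 0 - Dist n t s inp, Den n m} {\<lambda>inp. (0 - Dist n t s inp) / Den n m inp}" by (rule ext_div) auto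
  have 4: "ext 1 {\<lambda>inp. (0 - Dist n t s inp) / Den n m inp} {\<lambda>inp. exp ((0 - Dist n t s inp) / Den n m inp)}" by (rule ext_exp) auto
  have e: "(\<lambda>inp. exp ((0 - Dist n t s inp) / Den n m inp)) = Fe n m t s"
    unfolding Fe_def feat_def Dist_def Den_def by (simp add: power2_eq_square)
  have a: "ext 2 S {\<lambda>inp. 0 - Dist n t s inp}" by (rule ext_chain[OF 1 2]) (use assms in auto)
  have b: "ext 3 S {\<lambda>inp. (0 - Dist n t s inp) / Den n m inp}" by (rule ext_chain[OF a 3]) (use assms in auto)
  show ?thesis using e by (intro ext_chain[OF b 4]) auto
qed

lemma ext_Phi:
  assumes "Tf n m i \<in> S"
  shows "ext 3 S {Phi n m e i s}"
proof -
  define k where "k = real e * pi / 2 - cc i s"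
  have 1: "ext 1 S {\<lambda>inp. k}" by (rule ext_const)
  have 2: "ext 1 {Tf n m i, \<lambda>inp. k} {\<lambda>inp. Tf n m i inp + k}" by (rule ext_add) auto
  have 3: "ext 1 {\<lambda>inp. Tf n m i inp + k} {\<lambda>inp. cos (Tf n m i inp + k)}" by (rule ext_cos) auto
  have e: "(\<lambda>inp. cos (Tf n m i inp + k)) = Phi n m e i s"
  proof
    fix inp
    have "Tf n m i inp + k = tv n m inp i - cc i s + real e * pi / 2"
      unfolding Tf_def tv_def k_def by simp
    then show "cos (Tf n m i inp + k) = Phi n m e i s inp" unfolding Phi_def by simp
  qed
  have a: "ext 2 S {\<lambda>inp. Tf n m i inp + k}" by (rule ext_chain[OF 1 2]) (use assms in auto)
  show ?thesis using e by (intro ext_chain[OF a 3]) auto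
qed

lemma ext_W:
  assumes "\<And>i. i < m \<Longrightarrow> Phi n m (E i) i s \<in> S"
  shows "ext (Suc m) S {Wf n m E s}"
proof -
  have "(\<lambda>inp. \<Prod>i<m. Phi n m (E i) i s inp) = Wf n m E s"
    unfolding Wf_def wd_def Phi_def ..
  then show ?thesis using ext_prod[of m "\<lambda>i. Phi n m (E i) i s" S] assms by simp
qed

lemma ext_GS:
  assumes "\<And>s. s < 2^m \<Longrightarrow> Fe n m t s \<in> S" "\<And>s. s < 2^m \<Longrightarrow> Wf n m E s \<in> S"
  shows "ext (2^m * 1 + Suc (2^m)) S {GSf n m E t}"
proof -
  have "ext (2^m * 1 + Suc (2^m)) S {\<lambda>inp. \<Sum>s<2^m. (\<lambda>inp. Fe n m t s inp * Wf n m E s inp) inp}"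
    by (rule ext_sum_of, rule ext_mul) (use assms in auto)
  moreover have "(\<lambda>inp. \<Sum>s<2^m. (\<lambda>inp. Fe n m t s inp * Wf n m E s inp) inp) = GSf n m E t"
    unfolding GSf_def gs_def Fe_def Wf_def ..
  ultimately show ?thesis by simp
qed

lemma ext_Y:
  assumes "GSf n m (\<lambda>_. 0) t \<in> S" "Rf n m t \<in> S"
  shows "ext 1 S {Yf n m t}"
proof -
  have "(\<lambda>inp. GSf n m (\<lambda>_. 0) t inp - Rf n m t inp) = Yf n m t"
    unfolding GSf_def Rf_def Yf_def yv_def rv_def ..
  then show ?thesis using ext_sub[OF assms] by simp
qed

lemma ext_Z:
  assumes "\<And>t. t < 2^m \<Longrightarrow> Yf n m t \<in> S" "\<And>t. t < 2^m \<Longrightarrow> Fe n m t s \<in> S"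
  shows "ext (2^m * 1 + Suc (2^m)) S {Zf n m s}"
proof -
  have "ext (2^m * 1 + Suc (2^m)) S {\<lambda>inp. \<Sum>t<2^m. (\<lambda>inp. Yf n m t inp * Fe n m t s inp) inp}"
    by (rule ext_sum_of, rule ext_mul) (use assms in auto)
  moreover have "(\<lambda>inp. \<Sum>t<2^m. (\<lambda>inp. Yf n m t inp * Fe n m t s inp) inp) = Zf n m s"
    unfolding Zf_def Yf_def Fe_def ..
  ultimately show ?thesis by simp
qed

lemma Gr_swap:
  "Gr n m x r \<theta> j = 1 / 2^m * (\<Sum>s<2^m. (\<Sum>t<2^m. yv n m x r \<theta> t * feat n m x t s) * wd m \<theta> (ee j) s)"
proof -
  let ?y = "yv n m x r \<theta>" and ?F = "feat n m x" and ?W = "wd m \<theta> (ee j)"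
  have "(\<Sum>t<2^m. ?y t * (\<Sum>s<2^m. ?F t s * ?W s)) = (\<Sum>t<2^m. \<Sum>s<2^m. ?y t * ?F t s * ?W s)"
    by (simp add: sum_distrib_left mult.assoc)
  also have "\<dots> = (\<Sum>s<2^m. \<Sum>t<2^m. ?y t * ?F t s * ?W s)" by (rule sum.swap)
  also have "\<dots> = (\<Sum>s<2^m. (\<Sum>t<2^m. ?y t * ?F t s) * ?W s)" by (simp add: sum_distrib_right)
  finally show ?thesis unfolding Gr_def gs_def by simp
qed

lemma ext_G:
  assumes "\<And>s. s < 2^m \<Longrightarrow> Zf n m s \<in> S" "\<And>s. s < 2^m \<Longrightarrow> Wf n m (ee j) s \<in> S"
  shows "ext (2^m * 1 + Suc (2^m) + 2) S {Gf n m j}"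
proof -
  define Sm where "Sm = (\<lambda>inp. \<Sum>s<2^m. (\<lambda>inp. Zf n m s inp * Wf n m (ee j) s inp) inp)"
  have 1: "ext (2^m * 1 + Suc (2^m)) S {Sm}" unfolding Sm_def
    by (rule ext_sum_of, rule ext_mul) (use assms in auto)
  have 2: "ext 1 {} {\<lambda>inp. 1 / 2^m}" by (rule ext_const)
  have 3: "ext 1 {\<lambda>inp. 1 / 2^m, Sm} {\<lambda>inp. 1 / 2^m * Sm inp}" by (rule ext_mul) auto
  have e: "(\<lambda>inp. 1 / 2^m * Sm inp) = Gf n m j"
    unfolding Sm_def Gf_def Gr_swap Zf_def Wf_def ..
  have a: "ext (2^m * 1 + Suc (2^m) + 1) S {Sm, \<lambda>inp. 1 / 2^m}" by (rule ext_chain[OF 1 2]) auto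
  show ?thesis using e by (intro ext_chain[OF a 3]) auto
qed

lemma ext_Out1:
  assumes "Tf n m j \<in> S" "Ef n m \<in> S" "Gf n m j \<in> S"
  shows "ext 2 S {Out1 n m j}"
proof -
  have 1: "ext 1 S {\<lambda>inp. Ef n m inp * Gf n m j inp}" by (rule ext_mul) (use assms in auto)
  have 2: "ext 1 {Tf n m j, \<lambda>inp. Ef n m inp * Gf n m j inp} {\<lambda>inp. Tf n m j inp - Ef n m inp * Gf n m j inp}"
    by (rule ext_sub) auto
  have e: "(\<lambda>inp. Tf n m j inp - Ef n m inp * Gf n m j inp) = Out1 n m j"
    unfolding Tf_def Ef_def Gf_def Out1_def tv_def etv_def ..
  show ?thesis using e by (intro ext_chain[OF 1 2]) (use assms in auto)
qed

definition eek :: "nat \<Rightarrow> nat \<Rightarrow> nat \<Rightarrow> nat" where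
  "eek j k = (ee k)(j := Suc (ee k j))"

lemma ext_H:
  assumes "\<And>t. t < 2^m \<Longrightarrow> GSf n m (ee j) t \<in> S" "\<And>t. t < 2^m \<Longrightarrow> GSf n m (ee k) t \<in> S"
    "\<And>t. t < 2^m \<Longrightarrow> Yf n m t \<in> S" "\<And>t. t < 2^m \<Longrightarrow> GSf n m (eek j k) t \<in> S"
  shows "ext (2^m * 3 + Suc (2^m) + 2) S {Hf n m j k}"
proof -
  define tm where "tm t = (\<lambda>inp. GSf n m (ee j) t inp * GSf n m (ee k) t inp + Yf n m t inp * GSf n m (eek j k) t inp)" for t
  have t: "ext 3 S {tm t}" if "t < 2^m" for t
  proof -
    have 1: "ext 1 S {\<lambda>inp. GSf n m (ee j) t inp * GSf n m (ee k) t inp}" by (rule ext_mul) (use assms that in auto)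
    have 2: "ext 1 S {\<lambda>inp. Yf n m t inp * GSf n m (eek j k) t inp}" by (rule ext_mul) (use assms that in auto)
    have 3: "ext 1 {\<lambda>inp. GSf n m (ee j) t inp * GSf n m (ee k) t inp, \<lambda>inp. Yf n m t inp * GSf n m (eek j k) t inp} {tm t}"
      unfolding tm_def by (rule ext_add) auto
    show ?thesis by (rule ext_chain[OF ext_union[OF 1 2] 3]) auto
  qed
  define Sm where "Sm = (\<lambda>inp. \<Sum>t<2^m. tm t inp)"
  have 1: "ext (2^m * 3 + Suc (2^m)) S {Sm}" unfolding Sm_def
    by (rule ext_sum_of) (use t in auto)
  have 2: "ext 1 {} {\<lambda>inp. 1 / 2^m}" by (rule ext_const)
  have 3: "ext 1 {\<lambda>inp. 1 / 2^m, Sm} {\<lambda>inp. 1 / 2^m * Sm inp}" by (rule ext_mul) auto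
  have e: "(\<lambda>inp. 1 / 2^m * Sm inp) = Hf n m j k"
    unfolding Sm_def Hf_def Hs_def tm_def GSf_def Yf_def eek_def ..
  have a: "ext (2^m * 3 + Suc (2^m) + 1) S {Sm, \<lambda>inp. 1 / 2^m}" by (rule ext_chain[OF 1 2]) auto
  show ?thesis using e by (intro ext_chain[OF a 3]) auto
qed


declare sum.lessThan_Suc[simp del] prod.lessThan_Suc[simp del]

definition ind :: "(nat \<Rightarrow> nat \<Rightarrow> real) \<Rightarrow> nat \<Rightarrow> real" where
  "ind A i = A i 0 / A i 0"
definition qv :: "(nat \<Rightarrow> nat \<Rightarrow> real) \<Rightarrow> nat \<Rightarrow> real" where
  "qv A i = (\<Prod>l<Suc i. if l < i then 1 - ind A l else ind A i)"
definition Rv :: "nat \<Rightarrow> (nat \<Rightarrow> nat \<Rightarrow> real) \<Rightarrow> nat \<Rightarrow> real" where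
  "Rv k A l = (\<Sum>i<Suc k. qv A i * A i l)"
definition bv :: "nat \<Rightarrow> (nat \<Rightarrow> nat \<Rightarrow> real) \<Rightarrow> (nat \<Rightarrow> real) \<Rightarrow> real" where
  "bv k A b = (\<Sum>i<Suc k. qv A i * b i)"
definition A1 :: "(nat \<Rightarrow> nat \<Rightarrow> real) \<Rightarrow> nat \<Rightarrow> nat \<Rightarrow> real" where
  "A1 A i l = A i l + qv A i * (A 0 l - A i l)"
definition b1 :: "(nat \<Rightarrow> nat \<Rightarrow> real) \<Rightarrow> (nat \<Rightarrow> real) \<Rightarrow> nat \<Rightarrow> real" where
  "b1 A b i = b i + qv A i * (b 0 - b i)"
definition rt :: "nat \<Rightarrow> (nat \<Rightarrow> nat \<Rightarrow> real) \<Rightarrow> nat \<Rightarrow> real" where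
  "rt k A i = A1 A i 0 / Rv k A 0"
definition A2 :: "nat \<Rightarrow> (nat \<Rightarrow> nat \<Rightarrow> real) \<Rightarrow> nat \<Rightarrow> nat \<Rightarrow> real" where
  "A2 k A i l = A1 A i l - rt k A i * Rv k A l"
definition b2 :: "nat \<Rightarrow> (nat \<Rightarrow> nat \<Rightarrow> real) \<Rightarrow> (nat \<Rightarrow> real) \<Rightarrow> nat \<Rightarrow> real" where
  "b2 k A b i = b1 A b i - rt k A i * bv k A b"

fun solve :: "nat \<Rightarrow> (nat \<Rightarrow> nat \<Rightarrow> real) \<Rightarrow> (nat \<Rightarrow> real) \<Rightarrow> nat \<Rightarrow> real" where
  "solve 0 A b = (\<lambda>_. 0)"
| "solve (Suc k) A b =
     (let y = solve k (\<lambda>i l. A2 k A (Suc i) (Suc l)) (\<lambda>i. b2 k A b (Suc i))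
      in (\<lambda>l. if l = 0 then (bv k A b - (\<Sum>l<k. Rv k A (Suc l) * y l)) / Rv k A 0 else y (l - 1)))"

definition nonsing :: "nat \<Rightarrow> (nat \<Rightarrow> nat \<Rightarrow> real) \<Rightarrow> bool" where
  "nonsing k A \<longleftrightarrow> (\<forall>d. (\<forall>j<k. (\<Sum>l<k. A j l * d l) = 0) \<longrightarrow> (\<forall>l<k. d l = 0))"

lemma ind_eq: "ind A i = (if A i 0 = 0 then 0 else 1)"
  unfolding ind_def by simp

lemma qv_eq:
  assumes "A p 0 \<noteq> 0" "\<And>i. i < p \<Longrightarrow> A i 0 = 0"
  shows "qv A i = (if i = p then 1 else 0)"
proof (cases "i < p")
  case True
  then have "ind A i = 0" using assms(2) ind_eq by simp
  then show ?thesis unfolding qv_def using True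
    by (subst prod.lessThan_Suc) simp
next
  case False
  show ?thesis
  proof (cases "i = p")
    case True
    have "ind A p = 1" using assms(1) ind_eq by simp
    moreover have "(\<Prod>l<p. if l < p then 1 - ind A l else ind A p) = 1"
    proof (rule prod.neutral, intro ballI)
      fix l assume "l \<in> {..<p}"
      then have "l < p" "ind A l = 0" using assms(2) ind_eq by auto
      then show "(if l < p then 1 - ind A l else ind A p) = 1" by simp
    qed
    ultimately show ?thesis unfolding qv_def using True
      by (subst prod.lessThan_Suc) simp
  next
    case False
    with \<open>\<not> i < p\<close> have "p < i" by simp
    have "ind A p = 1" using assms(1) ind_eq by simp
    then have "(if p < i then 1 - ind A p else ind A i) = 0" using \<open>p < i\<close> by simp
    moreover have "p \<in> {..<Suc i}" using \<open>p < i\<close> by simp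
    ultimately have "qv A i = 0" unfolding qv_def
      by (intro prod_zero finite_lessThan bexI[where x=p]) simp_all
    then show ?thesis using False by simp
  qed
qed

lemma sum_delta_p: "p < Suc k \<Longrightarrow> (\<Sum>i<Suc k. (if i = p then 1 else 0) * f i) = (f p :: real)"
proof -
  assume "p < Suc k"
  have "(\<lambda>i. (if i = p then 1 else 0) * f i) = (\<lambda>i. if p = i then f i else 0)" by auto
  then have "(\<Sum>i<Suc k. (if i = p then 1 else 0) * f i) = (\<Sum>i<Suc k. if p = i then f i else 0)" by (rule arg_cong)
  also have "\<dots> = f p" using \<open>p < Suc k\<close> by (subst sum.delta') auto
  finally show ?thesis .
qed

lemma solve_correct:
  "nonsing k A \<Longrightarrow> j < k \<Longrightarrow> (\<Sum>l<k. A j l * solve k A b l) = b j"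
proof (induction k arbitrary: A b j)
  case 0
  then show ?case by simp
next
  case (Suc k)
  have ns0: "\<And>d. \<forall>j<Suc k. (\<Sum>l<Suc k. A j l * d l) = 0 \<Longrightarrow> \<forall>l<Suc k. d l = 0"
    using Suc.prems(1) unfolding nonsing_def by blast
  have ex: "\<exists>p<Suc k. A p 0 \<noteq> 0"
  proof (rule ccontr)
    assume "\<not> ?thesis"
    have "(\<Sum>l<Suc k. A j l * (if l = 0 then 1 else 0)) = A j 0" for j
      by (subst sum.lessThan_Suc_shift) simp
    then have "\<forall>j<Suc k. (\<Sum>l<Suc k. A j l * (if l = 0 then 1 else 0)) = 0"
      using \<open>\<not> (\<exists>p<Suc k. A p 0 \<noteq> 0)\<close> by simp
    from ns0[OF this] show False by (metis zero_less_Suc zero_neq_one)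
  qed
  define p where "p = (LEAST p. A p 0 \<noteq> 0)"
  have pA: "A p 0 \<noteq> 0" unfolding p_def by (metis (mono_tags, lifting) LeastI ex)
  have pk: "p < Suc k" unfolding p_def by (meson ex Least_le order.strict_trans1)
  have pl: "\<And>i. i < p \<Longrightarrow> A i 0 = 0" unfolding p_def using not_less_Least by blast
  note q = qv_eq[of A p, OF pA pl]
  have R: "\<And>l. Rv k A l = A p l" by (simp only: Rv_def q sum_delta_p[OF pk])
  have bb: "\<And>b. bv k A b = b p" by (simp only: bv_def q sum_delta_p[OF pk])
  have a1: "\<And>i l. A1 A i l = (if i = p then A 0 l else A i l)" by (simp add: A1_def q)
  have bb1: "\<And>b i. b1 A b i = (if i = p then b 0 else b i)" by (simp add: b1_def q)
  have a20: "\<And>i. A2 k A i 0 = 0" unfolding A2_def rt_def using pA R by simp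
  have shift: "\<And>i x. (\<Sum>l<Suc k. A2 k A i l * x l) = (\<Sum>l<k. A2 k A i (Suc l) * x (Suc l))"
    by (subst sum.lessThan_Suc_shift) (simp add: a20)
  have shiftp: "\<And>x. (\<Sum>l<Suc k. A p l * x l) = A p 0 * x 0 + (\<Sum>l<k. A p (Suc l) * x (Suc l))"
    by (subst sum.lessThan_Suc_shift) simp
  have rows: "\<forall>i<Suc k. (\<Sum>l<Suc k. A i l * x l) = t i"
    if h1: "(\<Sum>l<Suc k. A p l * x l) = t p"
      and h2: "\<And>i. 1 \<le> i \<Longrightarrow> i \<le> k \<Longrightarrow> (\<Sum>l<Suc k. A2 k A i l * x l) = (if i = p then t 0 else t i) - rt k A i * t p"
    for x t
  proof -
    have r1: "(\<Sum>l<Suc k. A1 A i l * x l) = (if i = p then t 0 else t i)" if "1 \<le> i" "i \<le> k" for i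
    proof -
      have "(\<Sum>l<Suc k. A2 k A i l * x l) = (\<Sum>l<Suc k. A1 A i l * x l) - rt k A i * (\<Sum>l<Suc k. Rv k A l * x l)"
        unfolding A2_def by (simp add: algebra_simps sum_subtractf sum_distrib_left)
      then show ?thesis using h2[OF that] h1 R by simp
    qed
    show ?thesis
    proof (intro allI impI)
      fix i assume i: "i < Suc k"
      show "(\<Sum>l<Suc k. A i l * x l) = t i"
      proof (cases "i = p")
        case True then show ?thesis using h1 by simp
      next
        case False
        show ?thesis
        proof (cases "i = 0")
          case True
          then have "1 \<le> p" "p \<le> k" using False pk by auto
          from r1[OF this] show ?thesis using True by (simp add: a1)
        next
          case False
          then have "1 \<le> i" "i \<le> k" using i by auto
          from r1[OF this] show ?thesis using \<open>i \<noteq> p\<close> by (simp add: a1)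
        qed
      qed
    qed
  qed
  define A' where "A' = (\<lambda>i l. A2 k A (Suc i) (Suc l))"
  define b' where "b' = (\<lambda>i. b2 k A b (Suc i))"
  have ns: "nonsing k A'"
    unfolding nonsing_def
  proof (intro allI impI)
    fix y l assume hy: "\<forall>j<k. (\<Sum>l<k. A' j l * y l) = 0" and l: "l < k"
    define x where "x = (\<lambda>l. if l = 0 then - (\<Sum>l<k. A p (Suc l) * y l) / A p 0 else y (l - 1))"
    have "\<forall>i<Suc k. (\<Sum>l<Suc k. A i l * x l) = (\<lambda>_. 0) i"
    proof (rule rows)
      show "(\<Sum>l<Suc k. A p l * x l) = 0" unfolding shiftp x_def using pA by simp
      fix i assume "1 \<le> i" "i \<le> k"
      then obtain i' where i': "i = Suc i'" "i' < k" by (cases i) auto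
      show "(\<Sum>l<Suc k. A2 k A i l * x l) = (if i = p then 0 else 0) - rt k A i * 0"
        unfolding shift x_def using hy i' unfolding A'_def by simp
    qed
    then have "\<forall>l<Suc k. x l = 0" using ns0 by simp
    then show "y l = 0" using l unfolding x_def by (metis Suc_less_eq diff_Suc_1 nat.distinct(1))
  qed
  define y where "y = solve k A' b'"
  have IH: "\<And>i. i < k \<Longrightarrow> (\<Sum>l<k. A' i l * y l) = b' i"
    using Suc.IH[OF ns, of _ b'] y_def by simp
  have sol: "solve (Suc k) A b = (\<lambda>l. if l = 0 then (b p - (\<Sum>l<k. A p (Suc l) * y l)) / A p 0 else y (l - 1))"
    unfolding y_def A'_def b'_def solve.simps Let_def R bb by (rule refl)
  have "\<forall>i<Suc k. (\<Sum>l<Suc k. A i l * solve (Suc k) A b l) = b i"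
  proof (rule rows)
    show "(\<Sum>l<Suc k. A p l * solve (Suc k) A b l) = b p" unfolding shiftp sol using pA by simp
    fix i assume "1 \<le> i" "i \<le> k"
    then obtain i' where i': "i = Suc i'" "i' < k" by (cases i) auto
    have "(\<Sum>l<Suc k. A2 k A i l * solve (Suc k) A b l) = b' i'"
      unfolding shift sol using IH[OF i'(2)] i' unfolding A'_def by simp
    also have "\<dots> = (if i = p then b 0 else b i) - rt k A i * b p"
      unfolding b'_def b2_def bb bb1 i' ..
    finally show "(\<Sum>l<Suc k. A2 k A i l * solve (Suc k) A b l) = (if i = p then b 0 else b i) - rt k A i * b p" .
  qed
  then show ?case using Suc.prems(2) by blast
qed


lemma ext_loop1:
  assumes "finite A" "\<And>a. a \<in> A \<Longrightarrow> ext k S {g a}"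
  shows "ext (card A * k) S (g ` A)"
  using ext_loop[OF assms(1), of k S "\<lambda>a. {g a}"] assms(2) by (simp add: UNION_singleton_eq_range)

lemma ext_loopN:
  assumes "finite A" "\<And>a. a \<in> A \<Longrightarrow> ext k S {g a}" "card A = N"
  shows "ext (N * k) S (g ` A)"
  using ext_loop1[OF assms(1,2)] assms(3) by simp

lemma ext_acc: "ext c S U \<Longrightarrow> ext k R T \<Longrightarrow> R \<subseteq> S \<union> U \<Longrightarrow> ext (c + k) S (U \<union> T)"
  by (rule ext_chain) auto

fun cs :: "nat \<Rightarrow> nat" where
  "cs 0 = 0"
| "cs (Suc k) = cs k + 26 * (Suc k * Suc k)"

lemma ext_solve:
  assumes "\<And>i l. i < k \<Longrightarrow> l < k \<Longrightarrow> Af i l \<in> S" "\<And>i. i < k \<Longrightarrow> bf i \<in> S"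
  shows "ext (cs k) S ((\<lambda>l inp. solve k (\<lambda>i l. Af i l inp) (\<lambda>i. bf i inp) l) ` {..<k})"
  using assms
proof (induction k arbitrary: Af bf S)
  case 0
  then show ?case by (simp add: ext_empty)
next
  case (Suc k)
  define K where "K = Suc k"
  define Ai where "Ai inp = (\<lambda>i l. Af i l inp)" for inp
  define Bi where "Bi inp = (\<lambda>i. bf i inp)" for inp
  have AS: "Af i l \<in> S" if "i < K" "l < K" for i l using Suc.prems that K_def by auto
  have BS: "bf i \<in> S" if "i < K" for i using Suc.prems that K_def by auto
  define indF where "indF i = (\<lambda>inp. ind (Ai inp) i)" for i
  define oneF :: fn where "oneF = (\<lambda>inp. 1)"
  define omF where "omF i = (\<lambda>inp. 1 - ind (Ai inp) i)" for i
  define qF where "qF i = (\<lambda>inp. qv (Ai inp) i)" for i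
  define qAF where "qAF i l = (\<lambda>inp. qv (Ai inp) i * Af i l inp)" for i l
  define RF where "RF l = (\<lambda>inp. Rv k (Ai inp) l)" for l
  define qbF where "qbF i = (\<lambda>inp. qv (Ai inp) i * bf i inp)" for i
  define BF where "BF = (\<lambda>inp. bv k (Ai inp) (Bi inp))"
  define A1F where "A1F i l = (\<lambda>inp. A1 (Ai inp) i l)" for i l
  define b1F where "b1F i = (\<lambda>inp. b1 (Ai inp) (Bi inp) i)" for i
  define rtF where "rtF i = (\<lambda>inp. rt k (Ai inp) i)" for i
  define A2F where "A2F i l = (\<lambda>inp. A2 k (Ai inp) i l)" for i l
  define b2F where "b2F i = (\<lambda>inp. b2 k (Ai inp) (Bi inp) i)" for i
  define yF where "yF l = (\<lambda>inp. solve k (\<lambda>i l. A2F (Suc i) (Suc l) inp) (\<lambda>i. b2F (Suc i) inp) l)" for l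
  define RyF where "RyF l = (\<lambda>inp. RF (Suc l) inp * yF l inp)" for l
  define sF where "sF = (\<lambda>inp. \<Sum>l<k. RyF l inp)"
  define nF where "nF = (\<lambda>inp. BF inp - sF inp)"
  define x0F where "x0F = (\<lambda>inp. nF inp / RF 0 inp)"
  define pr where "pr = (\<lambda>p::nat\<times>nat. (fst p, snd p))"
  let ?I = "{..<K}" and ?P = "{..<K} \<times> {..<K}"
  have s1: "ext (K * 1) S (indF ` ?I)"
    unfolding indF_def ind_def Ai_def by (rule ext_loopN, simp, rule ext_div) (auto intro: AS simp: card_cartesian_product)
  have s2: "ext 1 {} {oneF}" unfolding oneF_def by (rule ext_const)
  have s3: "ext (K * 1) ({oneF} \<union> indF ` ?I) (omF ` ?I)"
    by (rule ext_loopN) (auto simp: omF_def oneF_def indF_def intro!: ext_sub[where f = "\<lambda>inp. 1", simplified])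
  have s4: "ext (K * Suc K) (omF ` ?I \<union> indF ` ?I) (qF ` ?I)"
  proof (rule ext_loopN)
    fix i assume i: "i \<in> ?I"
    have "ext (Suc (Suc i)) (omF ` ?I \<union> indF ` ?I) {\<lambda>inp. \<Prod>l<Suc i. (if l < i then omF l else indF i) inp}"
      by (rule ext_prod) (use i in auto)
    moreover have "(\<lambda>inp. \<Prod>l<Suc i. (if l < i then omF l else indF i) inp) = qF i"
      unfolding qF_def qv_def omF_def indF_def by (intro ext prod.cong) auto
    ultimately show "ext (Suc K) (omF ` ?I \<union> indF ` ?I) {qF i}"
      using i by (auto elim!: ext_mono)
  qed (simp_all add: card_cartesian_product)
  have s5: "ext ((K*K) * 1) (S \<union> qF ` ?I) ((\<lambda>p. qAF (fst p) (snd p)) ` ?P)"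
    unfolding qAF_def qF_def by (rule ext_loopN, simp, rule ext_mul) (auto intro: AS simp: card_cartesian_product)
  have s6: "ext (K * Suc K) ((\<lambda>p. qAF (fst p) (snd p)) ` ?P) (RF ` ?I)"
  proof (rule ext_loopN)
    fix l assume l: "l \<in> ?I"
    have "ext (Suc K) ((\<lambda>p. qAF (fst p) (snd p)) ` ?P) {\<lambda>inp. \<Sum>i<K. qAF i l inp}"
      by (rule ext_sum) (use l in \<open>auto intro!: image_eqI[where x="(_, l)"]\<close>)
    moreover have "(\<lambda>inp. \<Sum>i<K. qAF i l inp) = RF l"
      unfolding RF_def Rv_def qAF_def K_def Ai_def ..
    ultimately show "ext (Suc K) ((\<lambda>p. qAF (fst p) (snd p)) ` ?P) {RF l}" by simp
  qed (simp_all add: card_cartesian_product)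
  have s7: "ext (K * 1) (S \<union> qF ` ?I) (qbF ` ?I)"
    unfolding qbF_def qF_def by (rule ext_loopN, simp, rule ext_mul) (auto intro: BS simp: card_cartesian_product)
  have s8: "ext (Suc K) (qbF ` ?I) {BF}"
  proof -
    have "ext (Suc K) (qbF ` ?I) {\<lambda>inp. \<Sum>i<K. qbF i inp}" by (rule ext_sum) auto
    moreover have "(\<lambda>inp. \<Sum>i<K. qbF i inp) = BF" unfolding BF_def bv_def qbF_def K_def Bi_def ..
    ultimately show ?thesis by simp
  qed
  have s9: "ext ((K*K) * 3) (S \<union> qF ` ?I) ((\<lambda>p. A1F (fst p) (snd p)) ` ?P)"
  proof (rule ext_loopN)
    fix p assume p: "p \<in> ?P"
    obtain i l where il: "p = (i, l)" "i < K" "l < K" using p by auto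
    have 1: "ext 1 (S \<union> qF ` ?I) {\<lambda>inp. Af 0 l inp - Af i l inp}" by (rule ext_sub) (use il in \<open>auto intro: AS\<close>)
    have 2: "ext 1 {qF i, \<lambda>inp. Af 0 l inp - Af i l inp} {\<lambda>inp. qF i inp * (Af 0 l inp - Af i l inp)}" by (rule ext_mul) auto
    have 3: "ext 1 {Af i l, \<lambda>inp. qF i inp * (Af 0 l inp - Af i l inp)} {\<lambda>inp. Af i l inp + qF i inp * (Af 0 l inp - Af i l inp)}" by (rule ext_add) auto
    have e: "(\<lambda>inp. Af i l inp + qF i inp * (Af 0 l inp - Af i l inp)) = A1F i l"
      unfolding A1F_def A1_def qF_def Ai_def ..
    have a: "ext 2 (S \<union> qF ` ?I) {\<lambda>inp. qF i inp * (Af 0 l inp - Af i l inp)}"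
      by (rule ext_chain[OF 1 2]) (use il in auto)
    show "ext 3 (S \<union> qF ` ?I) {A1F (fst p) (snd p)}"
      by (rule ext_chain[OF a 3]) (use il e in \<open>auto intro: AS\<close>)
  qed (simp_all add: card_cartesian_product)
  have s10: "ext (K * 3) (S \<union> qF ` ?I) (b1F ` ?I)"
  proof (rule ext_loopN)
    fix i assume i: "i \<in> ?I"
    have 1: "ext 1 (S \<union> qF ` ?I) {\<lambda>inp. bf 0 inp - bf i inp}" by (rule ext_sub) (use i in \<open>auto intro: BS\<close>)
    have 2: "ext 1 {qF i, \<lambda>inp. bf 0 inp - bf i inp} {\<lambda>inp. qF i inp * (bf 0 inp - bf i inp)}" by (rule ext_mul) auto
    have 3: "ext 1 {bf i, \<lambda>inp. qF i inp * (bf 0 inp - bf i inp)} {\<lambda>inp. bf i inp + qF i inp * (bf 0 inp - bf i inp)}" by (rule ext_add) auto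
    have e: "(\<lambda>inp. bf i inp + qF i inp * (bf 0 inp - bf i inp)) = b1F i"
      unfolding b1F_def b1_def qF_def Bi_def Ai_def ..
    have a: "ext 2 (S \<union> qF ` ?I) {\<lambda>inp. qF i inp * (bf 0 inp - bf i inp)}"
      by (rule ext_chain[OF 1 2]) (use i in auto)
    show "ext 3 (S \<union> qF ` ?I) {b1F i}"
      by (rule ext_chain[OF a 3]) (use i e in \<open>auto intro: BS\<close>)
  qed (simp_all add: card_cartesian_product)
  have s11: "ext (K * 1) ((\<lambda>p. A1F (fst p) (snd p)) ` ?P \<union> RF ` ?I) (rtF ` ?I)"
  proof (rule ext_loopN)
    fix i assume i: "i \<in> ?I"
    have "ext 1 ((\<lambda>p. A1F (fst p) (snd p)) ` ?P \<union> RF ` ?I) {\<lambda>inp. A1F i 0 inp / RF 0 inp}"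
      by (rule ext_div) (use i in \<open>auto simp: K_def intro!: image_eqI[where x="(i, 0)"]\<close>)
    moreover have "(\<lambda>inp. A1F i 0 inp / RF 0 inp) = rtF i" unfolding rtF_def rt_def A1F_def RF_def ..
    ultimately show "ext 1 ((\<lambda>p. A1F (fst p) (snd p)) ` ?P \<union> RF ` ?I) {rtF i}" by simp
  qed (simp_all add: card_cartesian_product)
  have s12: "ext ((K*K) * 2) ((\<lambda>p. A1F (fst p) (snd p)) ` ?P \<union> RF ` ?I \<union> rtF ` ?I) ((\<lambda>p. A2F (fst p) (snd p)) ` ?P)"
  proof (rule ext_loopN)
    fix p assume p: "p \<in> ?P"
    obtain i l where il: "p = (i, l)" "i < K" "l < K" using p by auto
    have 1: "ext 1 ((\<lambda>p. A1F (fst p) (snd p)) ` ?P \<union> RF ` ?I \<union> rtF ` ?I) {\<lambda>inp. rtF i inp * RF l inp}"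
      by (rule ext_mul) (use il in auto)
    have 2: "ext 1 {A1F i l, \<lambda>inp. rtF i inp * RF l inp} {\<lambda>inp. A1F i l inp - rtF i inp * RF l inp}"
      by (rule ext_sub) auto
    have e: "(\<lambda>inp. A1F i l inp - rtF i inp * RF l inp) = A2F i l"
      unfolding A2F_def A2_def A1F_def rtF_def RF_def ..
    show "ext 2 ((\<lambda>p. A1F (fst p) (snd p)) ` ?P \<union> RF ` ?I \<union> rtF ` ?I) {A2F (fst p) (snd p)}"
      by (rule ext_chain[OF 1 2]) (use il e in \<open>auto intro!: image_eqI[where x="(i, l)"]\<close>)
  qed (simp_all add: card_cartesian_product)
  have s13: "ext (K * 2) (b1F ` ?I \<union> rtF ` ?I \<union> {BF}) (b2F ` ?I)"
  proof (rule ext_loopN)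
    fix i assume i: "i \<in> ?I"
    have 1: "ext 1 (b1F ` ?I \<union> rtF ` ?I \<union> {BF}) {\<lambda>inp. rtF i inp * BF inp}"
      by (rule ext_mul) (use i in auto)
    have 2: "ext 1 {b1F i, \<lambda>inp. rtF i inp * BF inp} {\<lambda>inp. b1F i inp - rtF i inp * BF inp}"
      by (rule ext_sub) auto
    have e: "(\<lambda>inp. b1F i inp - rtF i inp * BF inp) = b2F i"
      unfolding b2F_def b2_def b1F_def rtF_def BF_def ..
    show "ext 2 (b1F ` ?I \<union> rtF ` ?I \<union> {BF}) {b2F i}"
      by (rule ext_chain[OF 1 2]) (use i e in auto)
  qed (simp_all add: card_cartesian_product)
  have s14: "ext (cs k) ((\<lambda>p. A2F (fst p) (snd p)) ` ?P \<union> b2F ` ?I) (yF ` {..<k})"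
  proof -
    have "ext (cs k) ((\<lambda>p. A2F (fst p) (snd p)) ` ?P \<union> b2F ` ?I)
       ((\<lambda>l inp. solve k (\<lambda>i l. A2F (Suc i) (Suc l) inp) (\<lambda>i. b2F (Suc i) inp) l) ` {..<k})"
      by (rule Suc.IH) (auto simp: K_def intro!: image_eqI[where x="(Suc _, Suc _)"])
    then show ?thesis unfolding yF_def .
  qed
  have s15: "ext (k * 1) (RF ` ?I \<union> yF ` {..<k}) (RyF ` {..<k})"
    unfolding RyF_def by (rule ext_loopN, simp, rule ext_mul) (auto simp: K_def)
  have s16: "ext (Suc k) (RyF ` {..<k}) {sF}" unfolding sF_def by (rule ext_sum) auto
  have s17: "ext 1 {BF, sF} {nF}" unfolding nF_def by (rule ext_sub) auto
  have s18: "ext 1 {nF, RF 0} {x0F}" unfolding x0F_def by (rule ext_div) auto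
  have fin: "(\<lambda>l inp. solve (Suc k) (\<lambda>i l. Af i l inp) (\<lambda>i. bf i inp) l) ` {..<Suc k} \<subseteq> {x0F} \<union> yF ` {..<k}"
  proof
    fix f assume "f \<in> (\<lambda>l inp. solve (Suc k) (\<lambda>i l. Af i l inp) (\<lambda>i. bf i inp) l) ` {..<Suc k}"
    then obtain l where l: "l < Suc k" "f = (\<lambda>inp. solve (Suc k) (\<lambda>i l. Af i l inp) (\<lambda>i. bf i inp) l)" by auto
    show "f \<in> {x0F} \<union> yF ` {..<k}"
    proof (cases l)
      case 0
      have "f = x0F"
        unfolding l(2) 0 x0F_def nF_def sF_def RyF_def yF_def BF_def RF_def A2F_def b2F_def Ai_def Bi_def
        by (simp add: Let_def)
      then show ?thesis by simp
    next
      case (Suc l')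
      have "f = yF l'"
        unfolding l(2) Suc yF_def A2F_def b2F_def Ai_def Bi_def by (simp add: Let_def)
      then show ?thesis using l Suc by simp
    qed
  qed
  define U1 where "U1 = indF ` ?I"
  define U2 where "U2 = U1 \<union> {oneF}"
  define U3 where "U3 = U2 \<union> omF ` ?I"
  define U4 where "U4 = U3 \<union> qF ` ?I"
  define U5 where "U5 = U4 \<union> (\<lambda>p. qAF (fst p) (snd p)) ` ?P"
  define U6 where "U6 = U5 \<union> RF ` ?I"
  define U7 where "U7 = U6 \<union> qbF ` ?I"
  define U8 where "U8 = U7 \<union> {BF}"
  define U9 where "U9 = U8 \<union> (\<lambda>p. A1F (fst p) (snd p)) ` ?P"
  define U10 where "U10 = U9 \<union> b1F ` ?I"
  define U11 where "U11 = U10 \<union> rtF ` ?I"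
  define U12 where "U12 = U11 \<union> (\<lambda>p. A2F (fst p) (snd p)) ` ?P"
  define U13 where "U13 = U12 \<union> b2F ` ?I"
  define U14 where "U14 = U13 \<union> yF ` {..<k}"
  define U15 where "U15 = U14 \<union> RyF ` {..<k}"
  define U16 where "U16 = U15 \<union> {sF}"
  define U17 where "U17 = U16 \<union> {nF}"
  define U18 where "U18 = U17 \<union> {x0F}"
  note Us = U1_def U2_def U3_def U4_def U5_def U6_def U7_def U8_def U9_def U10_def U11_def U12_def U13_def U14_def U15_def U16_def U17_def U18_def
  have c1: "ext (K * 1) S U1" unfolding U1_def by (rule s1)
  have c2: "ext (K * 1 + 1) S U2" unfolding U2_def by (rule ext_acc[OF c1 s2]) (unfold Us, auto simp: K_def)
  have c3: "ext (K * 1 + 1 + K * 1) S U3" unfolding U3_def by (rule ext_acc[OF c2 s3]) (unfold Us, auto simp: K_def)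
  have c4: "ext (K * 1 + 1 + K * 1 + K * Suc K) S U4" unfolding U4_def by (rule ext_acc[OF c3 s4]) (unfold Us, auto simp: K_def)
  have c5: "ext (K * 1 + 1 + K * 1 + K * Suc K + K * K * 1) S U5" unfolding U5_def by (rule ext_acc[OF c4 s5]) (unfold Us, auto simp: K_def)
  have c6: "ext (K * 1 + 1 + K * 1 + K * Suc K + K * K * 1 + K * Suc K) S U6" unfolding U6_def by (rule ext_acc[OF c5 s6]) (unfold Us, auto simp: K_def)
  have c7: "ext (K * 1 + 1 + K * 1 + K * Suc K + K * K * 1 + K * Suc K + K * 1) S U7" unfolding U7_def by (rule ext_acc[OF c6 s7]) (unfold Us, auto simp: K_def)
  have c8: "ext (K * 1 + 1 + K * 1 + K * Suc K + K * K * 1 + K * Suc K + K * 1 + Suc K) S U8" unfolding U8_def by (rule ext_acc[OF c7 s8]) (unfold Us, auto simp: K_def)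
  have c9: "ext (K * 1 + 1 + K * 1 + K * Suc K + K * K * 1 + K * Suc K + K * 1 + Suc K + K * K * 3) S U9" unfolding U9_def by (rule ext_acc[OF c8 s9]) (unfold Us, auto simp: K_def)
  have c10: "ext (K * 1 + 1 + K * 1 + K * Suc K + K * K * 1 + K * Suc K + K * 1 + Suc K + K * K * 3 + K * 3) S U10" unfolding U10_def by (rule ext_acc[OF c9 s10]) (unfold Us, auto simp: K_def)
  have c11: "ext (K * 1 + 1 + K * 1 + K * Suc K + K * K * 1 + K * Suc K + K * 1 + Suc K + K * K * 3 + K * 3 + K * 1) S U11" unfolding U11_def by (rule ext_acc[OF c10 s11]) (unfold Us, auto simp: K_def)
  have c12: "ext (K * 1 + 1 + K * 1 + K * Suc K + K * K * 1 + K * Suc K + K * 1 + Suc K + K * K * 3 + K * 3 + K * 1 + K * K * 2) S U12" unfolding U12_def by (rule ext_acc[OF c11 s12]) (unfold Us, auto simp: K_def)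
  have c13: "ext (K * 1 + 1 + K * 1 + K * Suc K + K * K * 1 + K * Suc K + K * 1 + Suc K + K * K * 3 + K * 3 + K * 1 + K * K * 2 + K * 2) S U13" unfolding U13_def by (rule ext_acc[OF c12 s13]) (unfold Us, auto simp: K_def)
  have c14: "ext (K * 1 + 1 + K * 1 + K * Suc K + K * K * 1 + K * Suc K + K * 1 + Suc K + K * K * 3 + K * 3 + K * 1 + K * K * 2 + K * 2 + cs k) S U14" unfolding U14_def by (rule ext_acc[OF c13 s14]) (unfold Us, auto simp: K_def)
  have c15: "ext (K * 1 + 1 + K * 1 + K * Suc K + K * K * 1 + K * Suc K + K * 1 + Suc K + K * K * 3 + K * 3 + K * 1 + K * K * 2 + K * 2 + cs k + k * 1) S U15" unfolding U15_def by (rule ext_acc[OF c14 s15]) (unfold Us, auto simp: K_def)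
  have c16: "ext (K * 1 + 1 + K * 1 + K * Suc K + K * K * 1 + K * Suc K + K * 1 + Suc K + K * K * 3 + K * 3 + K * 1 + K * K * 2 + K * 2 + cs k + k * 1 + Suc k) S U16" unfolding U16_def by (rule ext_acc[OF c15 s16]) (unfold Us, auto simp: K_def)
  have c17: "ext (K * 1 + 1 + K * 1 + K * Suc K + K * K * 1 + K * Suc K + K * 1 + Suc K + K * K * 3 + K * 3 + K * 1 + K * K * 2 + K * 2 + cs k + k * 1 + Suc k + 1) S U17" unfolding U17_def by (rule ext_acc[OF c16 s17]) (unfold Us, auto simp: K_def)
  have c18: "ext (K * 1 + 1 + K * 1 + K * Suc K + K * K * 1 + K * Suc K + K * 1 + Suc K + K * K * 3 + K * 3 + K * 1 + K * K * 2 + K * 2 + cs k + k * 1 + Suc k + 1 + 1) S U18" unfolding U18_def by (rule ext_acc[OF c17 s18]) (unfold Us, auto simp: K_def)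
  have cost: "K * 1 + 1 + K * 1 + K * Suc K + K * K * 1 + K * Suc K + K * 1 + Suc K + K * K * 3 + K * 3 + K * 1 + K * K * 2 + K * 2 + cs k + k * 1 + Suc k + 1 + 1 \<le> cs (Suc k)" unfolding K_def by (simp add: algebra_simps)
  have "ext (cs (Suc k)) S ((\<lambda>l inp. solve (Suc k) (\<lambda>i l. Af i l inp) (\<lambda>i. bf i inp) l) ` {..<Suc k})"
    by (rule ext_mono[OF c18 cost]) (use fin in \<open>auto simp: Us\<close>)
  then show ?case .
qed


lemma mem2: "a < A \<Longrightarrow> b < B \<Longrightarrow> f a b \<in> (\<lambda>p. f (fst p) (snd p)) ` ({..<A} \<times> {..<B})"
  by (rule image_eqI[where x="(a, b)"]) auto
lemma mem3: "a < A \<Longrightarrow> b < B \<Longrightarrow> c < C \<Longrightarrow> f a b c \<in> (\<lambda>q. f (fst q) (fst (snd q)) (snd (snd q))) ` ({..<A} \<times> {..<B} \<times> {..<C})"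
  by (rule image_eqI[where x="(a, b, c)"]) auto
lemma memk: "a < A \<Longrightarrow> b < A \<Longrightarrow> c < C \<Longrightarrow> f a b c \<in> (\<lambda>q. f (fst (fst q)) (snd (fst q)) (snd q)) ` (({..<A} \<times> {..<A}) \<times> {..<C})"
  by (rule image_eqI[where x="((a, b), c)"]) auto
lemma ee_lt: "ee j i < 3" unfolding ee_def by auto
lemma eek_lt: "eek j k i < 3" unfolding eek_def ee_def by auto

definition "Out2 n m k = (\<lambda>inp. tv n m inp k - solve m (\<lambda>i l. Hf n m i l inp) (\<lambda>i. Gf n m i inp) k)"

lemma ext_Out2:
  assumes "Tf n m k \<in> S" "(\<lambda>inp. solve m (\<lambda>i l. Hf n m i l inp) (\<lambda>i. Gf n m i inp) k) \<in> S"
  shows "ext 1 S {Out2 n m k}"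
proof -
  have "(\<lambda>inp. Tf n m k inp - (\<lambda>inp. solve m (\<lambda>i l. Hf n m i l inp) (\<lambda>i. Gf n m i inp) k) inp) = Out2 n m k"
    unfolding Out2_def Tf_def tv_def ..
  then show ?thesis using ext_sub[OF assms] by simp
qed

lemma chain:
  fixes n m :: nat
  shows "ext ((2^m*n*1) + (2^m*1) + (m*1) + (1) + (2^m*2^m*(3*n+1)) + (2^m*2^m*1) + (2^m*2^m+5) + (2^m*2^m*4) + (3*(m*2^m)*3) + (2^m*Suc m) + (m*2^m*Suc m) + (2^m*(2^m*1+Suc (2^m))) + (2^m*1) + (2^m*(2^m*1+Suc (2^m))) + (m*(2^m*1+Suc (2^m)+2)) + (m*2)) {} (Out1 n m ` {..<m}) \<and> ext ((2^m*n*1) + (2^m*1) + (m*1) + (1) + (2^m*2^m*(3*n+1)) + (2^m*2^m*1) + (2^m*2^m+5) + (2^m*2^m*4) + (3*(m*2^m)*3) + (2^m*Suc m) + (m*2^m*Suc m) + (2^m*(2^m*1+Suc (2^m))) + (2^m*1) + (2^m*(2^m*1+Suc (2^m))) + (m*(2^m*1+Suc (2^m)+2)) + (m*2) + (m*m*2^m*Suc m) + (m*2^m*(2^m*1+Suc (2^m))) + (m*m*2^m*(2^m*1+Suc (2^m))) + (m*m*(2^m*3+Suc (2^m)+2)) + (cs m) + (m*1)) {} (Out2 n m ` {..<m})"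
proof -
  define IX where "IX = (\<lambda>p. Xf n (fst p) (snd p)) ` ({..<2^m} \<times> {..<n})"
  define IR where "IR = Rf n m ` {..<2^m}"
  define IT where "IT = Tf n m ` {..<m}"
  define IE where "IE = {Ef n m}"
  define ID where "ID = (\<lambda>p. Dist n (fst p) (snd p)) ` ({..<2^m} \<times> {..<2^m})"
  define IS where "IS = (\<lambda>p. Sq n (fst p) (snd p)) ` ({..<2^m} \<times> {..<2^m})"
  define IDen where "IDen = {Den n m}"
  define IF where "IF = (\<lambda>p. Fe n m (fst p) (snd p)) ` ({..<2^m} \<times> {..<2^m})"
  define IPhi where "IPhi = (\<lambda>q. Phi n m (fst q) (fst (snd q)) (snd (snd q))) ` ({..<3} \<times> {..<m} \<times> {..<2^m})"
  define IW0 where "IW0 = Wf n m (\<lambda>_. 0) ` {..<2^m}"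
  define IWe where "IWe = (\<lambda>p. Wf n m (ee (fst p)) (snd p)) ` ({..<m} \<times> {..<2^m})"
  define IGS0 where "IGS0 = GSf n m (\<lambda>_. 0) ` {..<2^m}"
  define IY where "IY = Yf n m ` {..<2^m}"
  define IZ where "IZ = Zf n m ` {..<2^m}"
  define IG where "IG = Gf n m ` {..<m}"
  define IO1 where "IO1 = Out1 n m ` {..<m}"
  define IWk where "IWk = (\<lambda>q. Wf n m (eek (fst (fst q)) (snd (fst q))) (snd q)) ` (({..<m} \<times> {..<m}) \<times> {..<2^m})"
  define IGSe where "IGSe = (\<lambda>p. GSf n m (ee (fst p)) (snd p)) ` ({..<m} \<times> {..<2^m})"
  define IGSk where "IGSk = (\<lambda>q. GSf n m (eek (fst (fst q)) (snd (fst q))) (snd q)) ` (({..<m} \<times> {..<m}) \<times> {..<2^m})"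
  define IH where "IH = (\<lambda>p. Hf n m (fst p) (snd p)) ` ({..<m} \<times> {..<m})"
  define ISol where "ISol = (\<lambda>l inp. solve m (\<lambda>i l. Hf n m i l inp) (\<lambda>i. Gf n m i inp) l) ` {..<m}"
  define IO2 where "IO2 = Out2 n m ` {..<m}"
  have s1: "ext (2^m*n*1) ({}) IX"
    unfolding IX_def by (rule ext_loopN, simp, rule ext_X) (auto simp del: One_nat_def simp: card_cartesian_product)
  have s2: "ext (2^m*1) ({}) IR"
    unfolding IR_def by (rule ext_loopN, simp, rule ext_R) (auto simp del: One_nat_def )
  have s3: "ext (m*1) ({}) IT"
    unfolding IT_def by (rule ext_loopN, simp, rule ext_T) (auto simp del: One_nat_def )
  have s4: "ext (1) ({}) IE"
    unfolding IE_def by (rule ext_E)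
  have s5: "ext (2^m*2^m*(3*n+1)) (IX) ID"
    unfolding ID_def IX_def by (rule ext_loopN, simp, rule ext_Dist) (auto simp del: One_nat_def intro!: mem2 simp: card_cartesian_product)
  have s6: "ext (2^m*2^m*1) (ID) IS"
    unfolding IS_def ID_def by (rule ext_loopN, simp, rule ext_Sq) (auto simp del: One_nat_def intro!: mem2 simp: card_cartesian_product)
  have s7: "ext (2^m*2^m+5) (IS) IDen"
    unfolding IDen_def IS_def by (rule ext_Den) (auto simp del: One_nat_def intro!: mem2)
  have s8: "ext (2^m*2^m*4) (ID \<union> IDen) IF"
    unfolding IF_def ID_def IDen_def by (rule ext_loopN, simp, rule ext_Fe) (auto simp del: One_nat_def intro!: mem2 simp: card_cartesian_product)
  have s9: "ext (3*(m*2^m)*3) (IT) IPhi"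
    unfolding IPhi_def IT_def by (rule ext_loopN, simp, rule ext_Phi) (auto simp del: One_nat_def simp: card_cartesian_product)
  have s10: "ext (2^m*Suc m) (IPhi) IW0"
    unfolding IW0_def IPhi_def by (rule ext_loopN, simp, rule ext_W) (auto simp del: One_nat_def intro!: mem3)
  have s11: "ext (m*2^m*Suc m) (IPhi) IWe"
    unfolding IWe_def IPhi_def by (rule ext_loopN, simp, rule ext_W) (auto simp del: One_nat_def intro!: mem3 ee_lt simp: card_cartesian_product)
  have s12: "ext (2^m*(2^m*1+Suc (2^m))) (IF \<union> IW0) IGS0"
    unfolding IGS0_def IF_def IW0_def by (rule ext_loopN, simp, rule ext_GS) (auto simp del: One_nat_def intro!: mem2)
  have s13: "ext (2^m*1) (IGS0 \<union> IR) IY"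
    unfolding IY_def IGS0_def IR_def by (rule ext_loopN, simp, rule ext_Y) (auto simp del: One_nat_def )
  have s14: "ext (2^m*(2^m*1+Suc (2^m))) (IY \<union> IF) IZ"
    unfolding IZ_def IY_def IF_def by (rule ext_loopN, simp, rule ext_Z) (auto simp del: One_nat_def intro!: mem2)
  have s15: "ext (m*(2^m*1+Suc (2^m)+2)) (IZ \<union> IWe) IG"
    unfolding IG_def IZ_def IWe_def by (rule ext_loopN, simp, rule ext_G) (auto simp del: One_nat_def intro!: mem2)
  have s16: "ext (m*2) (IT \<union> IE \<union> IG) IO1"
    unfolding IO1_def IT_def IE_def IG_def by (rule ext_loopN, simp, rule ext_Out1) (auto simp del: One_nat_def )
  have s17: "ext (m*m*2^m*Suc m) (IPhi) IWk"
    unfolding IWk_def IPhi_def by (rule ext_loopN, simp, rule ext_W) (auto simp del: One_nat_def intro!: mem3 eek_lt simp: card_cartesian_product)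
  have s18: "ext (m*2^m*(2^m*1+Suc (2^m))) (IF \<union> IWe) IGSe"
    unfolding IGSe_def IF_def IWe_def by (rule ext_loopN, simp, rule ext_GS) (auto simp del: One_nat_def intro!: mem2 simp: card_cartesian_product)
  have s19: "ext (m*m*2^m*(2^m*1+Suc (2^m))) (IF \<union> IWk) IGSk"
    unfolding IGSk_def IF_def IWk_def by (rule ext_loopN, simp, rule ext_GS) (auto simp del: One_nat_def intro!: mem2 memk simp: card_cartesian_product)
  have s20: "ext (m*m*(2^m*3+Suc (2^m)+2)) (IGSe \<union> IY \<union> IGSk) IH"
    unfolding IH_def IGSe_def IY_def IGSk_def by (rule ext_loopN, simp, rule ext_H) (auto simp del: One_nat_def intro!: mem2 memk simp: card_cartesian_product)
  have s21: "ext (cs m) (IH \<union> IG) ISol"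
    unfolding ISol_def IH_def IG_def by (rule ext_solve) (auto simp del: One_nat_def intro!: mem2)
  have s22: "ext (m*1) (IT \<union> ISol) IO2"
    unfolding IO2_def IT_def ISol_def by (rule ext_loopN, simp, rule ext_Out2) (auto simp del: One_nat_def )
  define U1 where "U1 = IX"
  define U2 where "U2 = U1 \<union> IR"
  define U3 where "U3 = U2 \<union> IT"
  define U4 where "U4 = U3 \<union> IE"
  define U5 where "U5 = U4 \<union> ID"
  define U6 where "U6 = U5 \<union> IS"
  define U7 where "U7 = U6 \<union> IDen"
  define U8 where "U8 = U7 \<union> IF"
  define U9 where "U9 = U8 \<union> IPhi"
  define U10 where "U10 = U9 \<union> IW0"
  define U11 where "U11 = U10 \<union> IWe"
  define U12 where "U12 = U11 \<union> IGS0"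
  define U13 where "U13 = U12 \<union> IY"
  define U14 where "U14 = U13 \<union> IZ"
  define U15 where "U15 = U14 \<union> IG"
  define U16 where "U16 = U15 \<union> IO1"
  define U17 where "U17 = U16 \<union> IWk"
  define U18 where "U18 = U17 \<union> IGSe"
  define U19 where "U19 = U18 \<union> IGSk"
  define U20 where "U20 = U19 \<union> IH"
  define U21 where "U21 = U20 \<union> ISol"
  define U22 where "U22 = U21 \<union> IO2"
  note Us = U1_def U2_def U3_def U4_def U5_def U6_def U7_def U8_def U9_def U10_def U11_def U12_def U13_def U14_def U15_def U16_def U17_def U18_def U19_def U20_def U21_def U22_def
  have c1: "ext (2^m*n*1) {} U1" unfolding U1_def by (rule s1)
  have c2: "ext ((2^m*n*1) + (2^m*1)) {} U2" unfolding U2_def by (rule ext_acc[OF c1 s2]) (unfold Us, auto)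
  have c3: "ext ((2^m*n*1) + (2^m*1) + (m*1)) {} U3" unfolding U3_def by (rule ext_acc[OF c2 s3]) (unfold Us, auto)
  have c4: "ext ((2^m*n*1) + (2^m*1) + (m*1) + (1)) {} U4" unfolding U4_def by (rule ext_acc[OF c3 s4]) (unfold Us, auto)
  have c5: "ext ((2^m*n*1) + (2^m*1) + (m*1) + (1) + (2^m*2^m*(3*n+1))) {} U5" unfolding U5_def by (rule ext_acc[OF c4 s5]) (unfold Us, auto)
  have c6: "ext ((2^m*n*1) + (2^m*1) + (m*1) + (1) + (2^m*2^m*(3*n+1)) + (2^m*2^m*1)) {} U6" unfolding U6_def by (rule ext_acc[OF c5 s6]) (unfold Us, auto)
  have c7: "ext ((2^m*n*1) + (2^m*1) + (m*1) + (1) + (2^m*2^m*(3*n+1)) + (2^m*2^m*1) + (2^m*2^m+5)) {} U7" unfolding U7_def by (rule ext_acc[OF c6 s7]) (unfold Us, auto)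
  have c8: "ext ((2^m*n*1) + (2^m*1) + (m*1) + (1) + (2^m*2^m*(3*n+1)) + (2^m*2^m*1) + (2^m*2^m+5) + (2^m*2^m*4)) {} U8" unfolding U8_def by (rule ext_acc[OF c7 s8]) (unfold Us, auto)
  have c9: "ext ((2^m*n*1) + (2^m*1) + (m*1) + (1) + (2^m*2^m*(3*n+1)) + (2^m*2^m*1) + (2^m*2^m+5) + (2^m*2^m*4) + (3*(m*2^m)*3)) {} U9" unfolding U9_def by (rule ext_acc[OF c8 s9]) (unfold Us, auto)
  have c10: "ext ((2^m*n*1) + (2^m*1) + (m*1) + (1) + (2^m*2^m*(3*n+1)) + (2^m*2^m*1) + (2^m*2^m+5) + (2^m*2^m*4) + (3*(m*2^m)*3) + (2^m*Suc m)) {} U10" unfolding U10_def by (rule ext_acc[OF c9 s10]) (unfold Us, auto)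
  have c11: "ext ((2^m*n*1) + (2^m*1) + (m*1) + (1) + (2^m*2^m*(3*n+1)) + (2^m*2^m*1) + (2^m*2^m+5) + (2^m*2^m*4) + (3*(m*2^m)*3) + (2^m*Suc m) + (m*2^m*Suc m)) {} U11" unfolding U11_def by (rule ext_acc[OF c10 s11]) (unfold Us, auto)
  have c12: "ext ((2^m*n*1) + (2^m*1) + (m*1) + (1) + (2^m*2^m*(3*n+1)) + (2^m*2^m*1) + (2^m*2^m+5) + (2^m*2^m*4) + (3*(m*2^m)*3) + (2^m*Suc m) + (m*2^m*Suc m) + (2^m*(2^m*1+Suc (2^m)))) {} U12" unfolding U12_def by (rule ext_acc[OF c11 s12]) (unfold Us, auto)
  have c13: "ext ((2^m*n*1) + (2^m*1) + (m*1) + (1) + (2^m*2^m*(3*n+1)) + (2^m*2^m*1) + (2^m*2^m+5) + (2^m*2^m*4) + (3*(m*2^m)*3) + (2^m*Suc m) + (m*2^m*Suc m) + (2^m*(2^m*1+Suc (2^m))) + (2^m*1)) {} U13" unfolding U13_def by (rule ext_acc[OF c12 s13]) (unfold Us, auto)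
  have c14: "ext ((2^m*n*1) + (2^m*1) + (m*1) + (1) + (2^m*2^m*(3*n+1)) + (2^m*2^m*1) + (2^m*2^m+5) + (2^m*2^m*4) + (3*(m*2^m)*3) + (2^m*Suc m) + (m*2^m*Suc m) + (2^m*(2^m*1+Suc (2^m))) + (2^m*1) + (2^m*(2^m*1+Suc (2^m)))) {} U14" unfolding U14_def by (rule ext_acc[OF c13 s14]) (unfold Us, auto)
  have c15: "ext ((2^m*n*1) + (2^m*1) + (m*1) + (1) + (2^m*2^m*(3*n+1)) + (2^m*2^m*1) + (2^m*2^m+5) + (2^m*2^m*4) + (3*(m*2^m)*3) + (2^m*Suc m) + (m*2^m*Suc m) + (2^m*(2^m*1+Suc (2^m))) + (2^m*1) + (2^m*(2^m*1+Suc (2^m))) + (m*(2^m*1+Suc (2^m)+2))) {} U15" unfolding U15_def by (rule ext_acc[OF c14 s15]) (unfold Us, auto)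
  have c16: "ext ((2^m*n*1) + (2^m*1) + (m*1) + (1) + (2^m*2^m*(3*n+1)) + (2^m*2^m*1) + (2^m*2^m+5) + (2^m*2^m*4) + (3*(m*2^m)*3) + (2^m*Suc m) + (m*2^m*Suc m) + (2^m*(2^m*1+Suc (2^m))) + (2^m*1) + (2^m*(2^m*1+Suc (2^m))) + (m*(2^m*1+Suc (2^m)+2)) + (m*2)) {} U16" unfolding U16_def by (rule ext_acc[OF c15 s16]) (unfold Us, auto)
  have c17: "ext ((2^m*n*1) + (2^m*1) + (m*1) + (1) + (2^m*2^m*(3*n+1)) + (2^m*2^m*1) + (2^m*2^m+5) + (2^m*2^m*4) + (3*(m*2^m)*3) + (2^m*Suc m) + (m*2^m*Suc m) + (2^m*(2^m*1+Suc (2^m))) + (2^m*1) + (2^m*(2^m*1+Suc (2^m))) + (m*(2^m*1+Suc (2^m)+2)) + (m*2) + (m*m*2^m*Suc m)) {} U17" unfolding U17_def by (rule ext_acc[OF c16 s17]) (unfold Us, auto)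
  have c18: "ext ((2^m*n*1) + (2^m*1) + (m*1) + (1) + (2^m*2^m*(3*n+1)) + (2^m*2^m*1) + (2^m*2^m+5) + (2^m*2^m*4) + (3*(m*2^m)*3) + (2^m*Suc m) + (m*2^m*Suc m) + (2^m*(2^m*1+Suc (2^m))) + (2^m*1) + (2^m*(2^m*1+Suc (2^m))) + (m*(2^m*1+Suc (2^m)+2)) + (m*2) + (m*m*2^m*Suc m) + (m*2^m*(2^m*1+Suc (2^m)))) {} U18" unfolding U18_def by (rule ext_acc[OF c17 s18]) (unfold Us, auto)
  have c19: "ext ((2^m*n*1) + (2^m*1) + (m*1) + (1) + (2^m*2^m*(3*n+1)) + (2^m*2^m*1) + (2^m*2^m+5) + (2^m*2^m*4) + (3*(m*2^m)*3) + (2^m*Suc m) + (m*2^m*Suc m) + (2^m*(2^m*1+Suc (2^m))) + (2^m*1) + (2^m*(2^m*1+Suc (2^m))) + (m*(2^m*1+Suc (2^m)+2)) + (m*2) + (m*m*2^m*Suc m) + (m*2^m*(2^m*1+Suc (2^m))) + (m*m*2^m*(2^m*1+Suc (2^m)))) {} U19" unfolding U19_def by (rule ext_acc[OF c18 s19]) (unfold Us, auto)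
  have c20: "ext ((2^m*n*1) + (2^m*1) + (m*1) + (1) + (2^m*2^m*(3*n+1)) + (2^m*2^m*1) + (2^m*2^m+5) + (2^m*2^m*4) + (3*(m*2^m)*3) + (2^m*Suc m) + (m*2^m*Suc m) + (2^m*(2^m*1+Suc (2^m))) + (2^m*1) + (2^m*(2^m*1+Suc (2^m))) + (m*(2^m*1+Suc (2^m)+2)) + (m*2) + (m*m*2^m*Suc m) + (m*2^m*(2^m*1+Suc (2^m))) + (m*m*2^m*(2^m*1+Suc (2^m))) + (m*m*(2^m*3+Suc (2^m)+2))) {} U20" unfolding U20_def by (rule ext_acc[OF c19 s20]) (unfold Us, auto)
  have c21: "ext ((2^m*n*1) + (2^m*1) + (m*1) + (1) + (2^m*2^m*(3*n+1)) + (2^m*2^m*1) + (2^m*2^m+5) + (2^m*2^m*4) + (3*(m*2^m)*3) + (2^m*Suc m) + (m*2^m*Suc m) + (2^m*(2^m*1+Suc (2^m))) + (2^m*1) + (2^m*(2^m*1+Suc (2^m))) + (m*(2^m*1+Suc (2^m)+2)) + (m*2) + (m*m*2^m*Suc m) + (m*2^m*(2^m*1+Suc (2^m))) + (m*m*2^m*(2^m*1+Suc (2^m))) + (m*m*(2^m*3+Suc (2^m)+2)) + (cs m)) {} U21" unfolding U21_def by (rule ext_acc[OF c20 s21]) (unfold Us, auto)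
  have c22: "ext ((2^m*n*1) + (2^m*1) + (m*1) + (1) + (2^m*2^m*(3*n+1)) + (2^m*2^m*1) + (2^m*2^m+5) + (2^m*2^m*4) + (3*(m*2^m)*3) + (2^m*Suc m) + (m*2^m*Suc m) + (2^m*(2^m*1+Suc (2^m))) + (2^m*1) + (2^m*(2^m*1+Suc (2^m))) + (m*(2^m*1+Suc (2^m)+2)) + (m*2) + (m*m*2^m*Suc m) + (m*2^m*(2^m*1+Suc (2^m))) + (m*m*2^m*(2^m*1+Suc (2^m))) + (m*m*(2^m*3+Suc (2^m)+2)) + (cs m) + (m*1)) {} U22" unfolding U22_def by (rule ext_acc[OF c21 s22]) (unfold Us, auto)
  show ?thesis
  proof
    show "ext ((2^m*n*1) + (2^m*1) + (m*1) + (1) + (2^m*2^m*(3*n+1)) + (2^m*2^m*1) + (2^m*2^m+5) + (2^m*2^m*4) + (3*(m*2^m)*3) + (2^m*Suc m) + (m*2^m*Suc m) + (2^m*(2^m*1+Suc (2^m))) + (2^m*1) + (2^m*(2^m*1+Suc (2^m))) + (m*(2^m*1+Suc (2^m)+2)) + (m*2)) {} (Out1 n m ` {..<m})" by (rule ext_mono[OF c16]) (auto simp: Us IO1_def)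
    show "ext ((2^m*n*1) + (2^m*1) + (m*1) + (1) + (2^m*2^m*(3*n+1)) + (2^m*2^m*1) + (2^m*2^m+5) + (2^m*2^m*4) + (3*(m*2^m)*3) + (2^m*Suc m) + (m*2^m*Suc m) + (2^m*(2^m*1+Suc (2^m))) + (2^m*1) + (2^m*(2^m*1+Suc (2^m))) + (m*(2^m*1+Suc (2^m)+2)) + (m*2) + (m*m*2^m*Suc m) + (m*2^m*(2^m*1+Suc (2^m))) + (m*m*2^m*(2^m*1+Suc (2^m))) + (m*m*(2^m*3+Suc (2^m)+2)) + (cs m) + (m*1)) {} (Out2 n m ` {..<m})" by (rule ext_mono[OF c22]) (auto simp: Us IO2_def)
  qed
qed


lemma cs_bound: "cs k \<le> 26 * (k * k * k)"
proof (induction k)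
  case 0 then show ?case by simp
next
  case (Suc k)
  have "cs (Suc k) = cs k + 26 * (Suc k * Suc k)" by simp
  also have "\<dots> \<le> 26 * (k*k*k) + 26 * (Suc k * Suc k)" using Suc by simp
  also have "\<dots> \<le> 26 * (Suc k * Suc k * Suc k)" by (simp add: algebra_simps)
  finally show ?case .
qed


lemma costG:
  fixes M n m :: nat
  assumes "1 \<le> n" "1 \<le> M" "m \<le> M" "m * m \<le> 2 * M"
  shows "(M*n*1) + (M*1) + (m*1) + (1) + (M*M*(3*n+1)) + (M*M*1) + (M*M+5) + (M*M*4) + (3*(m*M)*3) + (M*Suc m) + (m*M*Suc m) + (M*(M*1+Suc (M))) + (M*1) + (M*(M*1+Suc (M))) + (m*(M*1+Suc (M)+2)) + (m*2) \<le> 60 * n * M * M"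
proof -
  define D where "D = n*M*M"
  define A where "A = M*M"
  define B where "B = m*M"
  define Cm where "Cm = m*m*M"
  define E where "E = m*m*M*M"
  define F3 where "F3 = m*m*m*M"
  define G2 where "G2 = m*M*M"
  define H2 where "H2 = m*m"
  define I3 where "I3 = m*m*m"
  have f1: "M*n \<le> D" "M \<le> D" "m \<le> D" "1 \<le> D" "A \<le> D" "B \<le> D" "Cm \<le> 2*D"
  proof -
    have MM: "M \<le> M*M" using assms by simp
    have DD: "M*M \<le> D" unfolding D_def using assms by simp
    show "M*n \<le> D" unfolding D_def using assms by simp
    show "M \<le> D" using MM DD by linarith
    show "m \<le> D" using MM DD assms by linarith
    show "1 \<le> D" using MM DD assms by linarith
    show "A \<le> D" using DD A_def by simp
    show "B \<le> D" unfolding B_def using DD assms(3) mult_right_mono[OF assms(3), of M] by linarith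
    have "m*m*M \<le> 2*M*M" using assms(4) mult_right_mono[OF assms(4), of M] by simp
    then show "Cm \<le> 2*D" unfolding Cm_def using DD by linarith
  qed
  have f2: "F3 \<le> E" "G2 \<le> E" "H2 \<le> E" "I3 \<le> E" "cs m \<le> 26 * I3"
  proof -
    have mM: "m*m*m \<le> m*m*M" using assms(3) by simp
    have mM2: "m*m*M \<le> m*m*M*M" using assms(2) by simp
    show "F3 \<le> E" unfolding F3_def E_def using assms(3) by simp
    show "G2 \<le> E" unfolding G2_def E_def by (cases m) auto
    show "H2 \<le> E" unfolding H2_def E_def using assms(2) by (simp add: mult_le_cancel_left1 Suc_le_eq)
    show "I3 \<le> E" unfolding I3_def E_def using mM mM2 by linarith
    show "cs m \<le> 26 * I3" unfolding I3_def by (rule cs_bound)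
  qed
  have eq: "(M*n*1) + (M*1) + (m*1) + (1) + (M*M*(3*n+1)) + (M*M*1) + (M*M+5) + (M*M*4) + (3*(m*M)*3) + (M*Suc m) + (m*M*Suc m) + (M*(M*1+Suc (M))) + (M*1) + (M*(M*1+Suc (M))) + (m*(M*1+Suc (M)+2)) + (m*2) = 6 * 1 + 5 * M + 11 * A + 3 * D + 13 * B + 1 * Cm + 1 * (M*n) + 6 * m"
    unfolding D_def A_def B_def Cm_def E_def F3_def G2_def H2_def I3_def by (simp add: algebra_simps)
  have "6 * 1 + 5 * M + 11 * A + 3 * D + 13 * B + 1 * Cm + 1 * (M*n) + 6 * m \<le> 60 * D" using f1 f2 by linarith
  then show ?thesis unfolding eq D_def by (simp add: algebra_simps)
qed

lemma costN:
  fixes M n m :: nat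
  assumes "1 \<le> n" "1 \<le> M" "m \<le> M" "m * m \<le> 2 * M"
  shows "(M*n*1) + (M*1) + (m*1) + (1) + (M*M*(3*n+1)) + (M*M*1) + (M*M+5) + (M*M*4) + (3*(m*M)*3) + (M*Suc m) + (m*M*Suc m) + (M*(M*1+Suc (M))) + (M*1) + (M*(M*1+Suc (M))) + (m*(M*1+Suc (M)+2)) + (m*2) + (m*m*M*Suc m) + (m*M*(M*1+Suc (M))) + (m*m*M*(M*1+Suc (M))) + (m*m*(M*3+Suc (M)+2)) + (cs m) + (m*1) \<le> 200 * (M * M) * (n + m * m)"
proof -
  define D where "D = n*M*M"
  define A where "A = M*M"
  define B where "B = m*M"
  define Cm where "Cm = m*m*M"
  define E where "E = m*m*M*M"
  define F3 where "F3 = m*m*m*M"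
  define G2 where "G2 = m*M*M"
  define H2 where "H2 = m*m"
  define I3 where "I3 = m*m*m"
  have f1: "M*n \<le> D" "M \<le> D" "m \<le> D" "1 \<le> D" "A \<le> D" "B \<le> D" "Cm \<le> 2*D"
  proof -
    have MM: "M \<le> M*M" using assms by simp
    have DD: "M*M \<le> D" unfolding D_def using assms by simp
    show "M*n \<le> D" unfolding D_def using assms by simp
    show "M \<le> D" using MM DD by linarith
    show "m \<le> D" using MM DD assms by linarith
    show "1 \<le> D" using MM DD assms by linarith
    show "A \<le> D" using DD A_def by simp
    show "B \<le> D" unfolding B_def using DD assms(3) mult_right_mono[OF assms(3), of M] by linarith
    have "m*m*M \<le> 2*M*M" using assms(4) mult_right_mono[OF assms(4), of M] by simp
    then show "Cm \<le> 2*D" unfolding Cm_def using DD by linarith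
  qed
  have f2: "F3 \<le> E" "G2 \<le> E" "H2 \<le> E" "I3 \<le> E" "cs m \<le> 26 * I3"
  proof -
    have mM: "m*m*m \<le> m*m*M" using assms(3) by simp
    have mM2: "m*m*M \<le> m*m*M*M" using assms(2) by simp
    show "F3 \<le> E" unfolding F3_def E_def using assms(3) by simp
    show "G2 \<le> E" unfolding G2_def E_def by (cases m) auto
    show "H2 \<le> E" unfolding H2_def E_def using assms(2) by (simp add: mult_le_cancel_left1 Suc_le_eq)
    show "I3 \<le> E" unfolding I3_def E_def using mM mM2 by linarith
    show "cs m \<le> 26 * I3" unfolding I3_def by (rule cs_bound)
  qed
  have eq: "(M*n*1) + (M*1) + (m*1) + (1) + (M*M*(3*n+1)) + (M*M*1) + (M*M+5) + (M*M*4) + (3*(m*M)*3) + (M*Suc m) + (m*M*Suc m) + (M*(M*1+Suc (M))) + (M*1) + (M*(M*1+Suc (M))) + (m*(M*1+Suc (M)+2)) + (m*2) + (m*m*M*Suc m) + (m*M*(M*1+Suc (M))) + (m*m*M*(M*1+Suc (M))) + (m*m*(M*3+Suc (M)+2)) + (cs m) + (m*1) = 6 * 1 + 1 * cs m + 5 * M + 11 * A + 2 * G2 + 2 * E + 3 * D + 14 * B + 7 * Cm + 1 * F3 + 1 * (M*n) + 7 * m + 3 * H2"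
    unfolding D_def A_def B_def Cm_def E_def F3_def G2_def H2_def I3_def by (simp add: algebra_simps)
  have eq2: "200 * (M * M) * (n + m * m) = 200 * D + 200 * E" unfolding D_def E_def by (simp add: algebra_simps)
  have "6 * 1 + 1 * cs m + 5 * M + 11 * A + 2 * G2 + 2 * E + 3 * D + 14 * B + 7 * Cm + 1 * F3 + 1 * (M*n) + 7 * m + 3 * H2 \<le> 200 * D + 200 * E" using f1 f2 by linarith
  then show ?thesis unfolding eq eq2 .
qed


lemma slp_outs:
  assumes "slp c S" "\<And>j. j < m \<Longrightarrow> ofn j \<in> S"
  shows "\<exists>P outs. length P \<le> c \<and> length outs = m \<and> (\<forall>inp. run P outs inp = map (\<lambda>j. ofn j inp) [0..<m])"
proof -
  obtain P where P: "length P \<le> c" "\<forall>f\<in>S. computes P f" using assms(1) unfolding slp_def by blast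
  define idx where "idx j = (SOME i. \<forall>inp. val (exec inp [] P) i = ofn j inp)" for j
  have idx: "\<forall>inp. val (exec inp [] P) (idx j) = ofn j inp" if "j < m" for j
  proof -
    have "\<exists>i. \<forall>inp. val (exec inp [] P) i = ofn j inp" using P(2) assms(2)[OF that] computes_idx by blast
    then show ?thesis unfolding idx_def by (rule someI_ex)
  qed
  have "run P (map idx [0..<m]) inp = map (\<lambda>j. ofn j inp) [0..<m]" for inp
    unfolding run_def using idx by simp
  then show ?thesis using P(1) by (intro exI[of _ P] exI[of _ "map idx [0..<m]"]) auto
qed

lemma enc_x: "t < 2^m \<Longrightarrow> i < n \<Longrightarrow> xv n (enc n m x r \<theta> \<eta>) t i = x t i"
proof -
  assume a: "t < 2^m" "i < n"
  have "t * n + i < (t+1) * n" using a by simp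
  also have "\<dots> \<le> 2^m * n" using a by (intro mult_right_mono) auto
  finally have "t * n + i < 2^m * n" .
  then show ?thesis unfolding xv_def enc_def Let_def using a by (simp add: mult.commute)
qed

lemma enc_r: "t < 2^m \<Longrightarrow> rv n m (enc n m x r \<theta> \<eta>) t = r t"
  unfolding rv_def enc_def Let_def by simp

lemma enc_t: "j < m \<Longrightarrow> tv n m (enc n m x r \<theta> \<eta>) j = \<theta> j"
  unfolding tv_def enc_def Let_def by simp

lemma enc_e: "etv n m (enc n m x r \<theta> \<eta>) = \<eta>"
  unfolding etv_def enc_def Let_def by simp

locale agree =
  fixes n m :: nat and x x' :: "nat \<Rightarrow> nat \<Rightarrow> real" and r r' \<theta> \<theta>' :: "nat \<Rightarrow> real"
  assumes hx: "\<And>t i. t < 2^m \<Longrightarrow> i < n \<Longrightarrow> x' t i = x t i"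
    and hr: "\<And>t. t < 2^m \<Longrightarrow> r' t = r t"
    and ht: "\<And>i. i < m \<Longrightarrow> \<theta>' i = \<theta> i"
begin

lemma d2: "t < 2^m \<Longrightarrow> s < 2^m \<Longrightarrow> dist2 n x' t s = dist2 n x t s"
  unfolding dist2_def using hx by simp

lemma sig: "sigma n m x' = sigma n m x"
proof -
  have "{sqrt (dist2 n x' a b) | a b. a < 2^m \<and> b < 2^m} = {sqrt (dist2 n x a b) | a b. a < 2^m \<and> b < 2^m}"
    using d2 by (metis (no_types, opaque_lifting))
  then show ?thesis unfolding sigma_def by simp
qed

lemma ft: "t < 2^m \<Longrightarrow> s < 2^m \<Longrightarrow> feat n m x' t s = feat n m x t s"
  unfolding feat_def using d2 sig by simp

lemma wdc: "wd m \<theta>' E s = wd m \<theta> E s"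
  unfolding wd_def using ht by simp

lemma gsc: "t < 2^m \<Longrightarrow> gs n m x' \<theta>' E t = gs n m x \<theta> E t"
  unfolding gs_def using ft wdc by simp

lemma yvc: "t < 2^m \<Longrightarrow> yv n m x' r' \<theta>' t = yv n m x r \<theta> t"
  unfolding yv_def using gsc hr by simp

lemma Grc: "Gr n m x' r' \<theta>' j = Gr n m x r \<theta> j"
  unfolding Gr_def using gsc yvc by simp

lemma Hsc: "Hs n m x' r' \<theta>' j k = Hs n m x r \<theta> j k"
  unfolding Hs_def using gsc yvc by simp

end

lemma agree_enc: "agree n m x (xv n (enc n m x r \<theta> \<eta>)) r (rv n m (enc n m x r \<theta> \<eta>)) \<theta> (tv n m (enc n m x r \<theta> \<eta>))"
  by unfold_locales (auto simp: enc_x enc_r enc_t)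

lemma m_lt: "m < (2::nat)^m"
proof (induction m)
  case 0 then show ?case by simp
next
  case (Suc m)
  have a: "1 \<le> (2::nat)^m" by simp
  have b: "(2::nat)^Suc m = 2 * 2^m" by simp
  show ?case unfolding b using Suc.IH a by linarith
qed

lemma m_le: "m \<le> (2::nat)^m"
  using m_lt[of m] by simp

lemma mm_le: "m * m \<le> 2 * (2::nat)^m"
proof (induction m)
  case 0 then show ?case by simp
next
  case (Suc m)
  have "2 * m + 1 \<le> 2 * 2^m"
  proof (cases m)
    case 0 then show ?thesis by simp
  next
    case (Suc k)
    have "k < 2^k" by (rule m_lt)
    moreover have "(2::nat)^m = 2 * 2^k" using Suc by simp
    ultimately show ?thesis using Suc by linarith
  qed
  then show ?case using Suc.IH by simp
qed

theorem theorem1: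
  shows
  "(\<exists>C>0. \<forall>n\<ge>1. \<forall>m\<ge>1. \<exists>P outs.
      real (length P) \<le> C * real n * (2 ^ m)^2 \<and>
      (\<forall>x r \<theta> \<eta>. (\<forall>t<2^m. r t = 1 \<or> r t = -1) \<longrightarrow>
         run P outs (enc n m x r \<theta> \<eta>) = map (\<lambda>j. \<theta> j - \<eta> * gradL n m x r \<theta> j) [0..<m]))
   \<and>
   (\<exists>C>0. \<forall>n\<ge>1. \<forall>m\<ge>1. \<exists>P outs.
      real (length P) \<le> C * (2 ^ m)^2 * (real n + (real m)^2) \<and>
      length outs = m \<and>
      (\<forall>x r \<theta> \<eta>. (\<forall>t<2^m. r t = 1 \<or> r t = -1) \<longrightarrow>
         (\<forall>d. (\<forall>j<m. (\<Sum>k<m. hessL n m x r \<theta> j k * d k) = 0) \<longrightarrow> (\<forall>k<m. d k = 0)) \<longrightarrow>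
         (\<forall>j<m. (\<Sum>k<m. hessL n m x r \<theta> j k * (\<theta> k - run P outs (enc n m x r \<theta> \<eta>) ! k))
                 = gradL n m x r \<theta> j)))"
proof
  show "\<exists>C>0. \<forall>n\<ge>1. \<forall>m\<ge>1. \<exists>P outs.
      real (length P) \<le> C * real n * (2 ^ m)^2 \<and>
      (\<forall>x r \<theta> \<eta>. (\<forall>t<2^m. r t = 1 \<or> r t = -1) \<longrightarrow>
         run P outs (enc n m x r \<theta> \<eta>) = map (\<lambda>j. \<theta> j - \<eta> * gradL n m x r \<theta> j) [0..<m])"
  proof (intro exI[of _ 60] conjI allI impI)
    fix n m :: nat assume n: "1 \<le> n" and m: "1 \<le> m"
    have e: "ext ((2^m*n*1) + (2^m*1) + (m*1) + (1) + (2^m*2^m*(3*n+1)) + (2^m*2^m*1) + (2^m*2^m+5) + (2^m*2^m*4) + (3*(m*2^m)*3) + (2^m*Suc m) + (m*2^m*Suc m) + (2^m*(2^m*1+Suc (2^m))) + (2^m*1) + (2^m*(2^m*1+Suc (2^m))) + (m*(2^m*1+Suc (2^m)+2)) + (m*2)) {} (Out1 n m ` {..<m})" using chain by blast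
    have "slp (0 + ((2^m*n*1) + (2^m*1) + (m*1) + (1) + (2^m*2^m*(3*n+1)) + (2^m*2^m*1) + (2^m*2^m+5) + (2^m*2^m*4) + (3*(m*2^m)*3) + (2^m*Suc m) + (m*2^m*Suc m) + (2^m*(2^m*1+Suc (2^m))) + (2^m*1) + (2^m*(2^m*1+Suc (2^m))) + (m*(2^m*1+Suc (2^m)+2)) + (m*2))) ({} \<union> Out1 n m ` {..<m})" by (rule ext_apply[OF slp_empty e])
    then have "slp ((2^m*n*1) + (2^m*1) + (m*1) + (1) + (2^m*2^m*(3*n+1)) + (2^m*2^m*1) + (2^m*2^m+5) + (2^m*2^m*4) + (3*(m*2^m)*3) + (2^m*Suc m) + (m*2^m*Suc m) + (2^m*(2^m*1+Suc (2^m))) + (2^m*1) + (2^m*(2^m*1+Suc (2^m))) + (m*(2^m*1+Suc (2^m)+2)) + (m*2)) (Out1 n m ` {..<m})" by simp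
    from slp_outs[OF this, of m "Out1 n m"] obtain P outs where
      P: "length P \<le> (2^m*n*1) + (2^m*1) + (m*1) + (1) + (2^m*2^m*(3*n+1)) + (2^m*2^m*1) + (2^m*2^m+5) + (2^m*2^m*4) + (3*(m*2^m)*3) + (2^m*Suc m) + (m*2^m*Suc m) + (2^m*(2^m*1+Suc (2^m))) + (2^m*1) + (2^m*(2^m*1+Suc (2^m))) + (m*(2^m*1+Suc (2^m)+2)) + (m*2)" "\<forall>inp. run P outs inp = map (\<lambda>j. Out1 n m j inp) [0..<m]" by auto
    have one: "1 \<le> (2::nat)^m" by simp
    have "length P \<le> 60 * n * 2^m * 2^m"
      by (rule order.trans[OF P(1) costG[OF n one m_le mm_le]])
    then have "real (length P) \<le> real (60 * n * 2^m * 2^m)" by (rule of_nat_mono)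
    then have L: "real (length P) \<le> 60 * real n * (2^m)^2" by (simp add: power2_eq_square mult.assoc)
    show "\<exists>P outs. real (length P) \<le> 60 * real n * (2 ^ m)^2 \<and>
      (\<forall>x r \<theta> \<eta>. (\<forall>t<2^m. r t = 1 \<or> r t = -1) \<longrightarrow>
         run P outs (enc n m x r \<theta> \<eta>) = map (\<lambda>j. \<theta> j - \<eta> * gradL n m x r \<theta> j) [0..<m])"
    proof (intro exI[of _ P] exI[of _ outs] conjI L allI impI)
      fix x r \<theta> \<eta>
      interpret a: agree n m x "xv n (enc n m x r \<theta> \<eta>)" r "rv n m (enc n m x r \<theta> \<eta>)" \<theta> "tv n m (enc n m x r \<theta> \<eta>)"
        by (rule agree_enc)
      show "run P outs (enc n m x r \<theta> \<eta>) = map (\<lambda>j. \<theta> j - \<eta> * gradL n m x r \<theta> j) [0..<m]"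
        unfolding P(2)[rule_format] by (intro map_cong refl) (simp add: Out1_def enc_t enc_e a.Grc gradL_eq)
    qed
  qed (simp)
next
  show "\<exists>C>0. \<forall>n\<ge>1. \<forall>m\<ge>1. \<exists>P outs.
      real (length P) \<le> C * (2 ^ m)^2 * (real n + (real m)^2) \<and>
      length outs = m \<and>
      (\<forall>x r \<theta> \<eta>. (\<forall>t<2^m. r t = 1 \<or> r t = -1) \<longrightarrow>
         (\<forall>d. (\<forall>j<m. (\<Sum>k<m. hessL n m x r \<theta> j k * d k) = 0) \<longrightarrow> (\<forall>k<m. d k = 0)) \<longrightarrow>
         (\<forall>j<m. (\<Sum>k<m. hessL n m x r \<theta> j k * (\<theta> k - run P outs (enc n m x r \<theta> \<eta>) ! k))
                 = gradL n m x r \<theta> j))"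
  proof (intro exI[of _ 200] conjI allI impI)
    fix n m :: nat assume n: "1 \<le> n" and m: "1 \<le> m"
    have e: "ext ((2^m*n*1) + (2^m*1) + (m*1) + (1) + (2^m*2^m*(3*n+1)) + (2^m*2^m*1) + (2^m*2^m+5) + (2^m*2^m*4) + (3*(m*2^m)*3) + (2^m*Suc m) + (m*2^m*Suc m) + (2^m*(2^m*1+Suc (2^m))) + (2^m*1) + (2^m*(2^m*1+Suc (2^m))) + (m*(2^m*1+Suc (2^m)+2)) + (m*2) + (m*m*2^m*Suc m) + (m*2^m*(2^m*1+Suc (2^m))) + (m*m*2^m*(2^m*1+Suc (2^m))) + (m*m*(2^m*3+Suc (2^m)+2)) + (cs m) + (m*1)) {} (Out2 n m ` {..<m})" using chain by blast
    have "slp (0 + ((2^m*n*1) + (2^m*1) + (m*1) + (1) + (2^m*2^m*(3*n+1)) + (2^m*2^m*1) + (2^m*2^m+5) + (2^m*2^m*4) + (3*(m*2^m)*3) + (2^m*Suc m) + (m*2^m*Suc m) + (2^m*(2^m*1+Suc (2^m))) + (2^m*1) + (2^m*(2^m*1+Suc (2^m))) + (m*(2^m*1+Suc (2^m)+2)) + (m*2) + (m*m*2^m*Suc m) + (m*2^m*(2^m*1+Suc (2^m))) + (m*m*2^m*(2^m*1+Suc (2^m))) + (m*m*(2^m*3+Suc (2^m)+2)) + (cs m) + (m*1))) ({} \<union> Out2 n m ` {..<m})" by (rule ext_apply[OF slp_empty e])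
    then have "slp ((2^m*n*1) + (2^m*1) + (m*1) + (1) + (2^m*2^m*(3*n+1)) + (2^m*2^m*1) + (2^m*2^m+5) + (2^m*2^m*4) + (3*(m*2^m)*3) + (2^m*Suc m) + (m*2^m*Suc m) + (2^m*(2^m*1+Suc (2^m))) + (2^m*1) + (2^m*(2^m*1+Suc (2^m))) + (m*(2^m*1+Suc (2^m)+2)) + (m*2) + (m*m*2^m*Suc m) + (m*2^m*(2^m*1+Suc (2^m))) + (m*m*2^m*(2^m*1+Suc (2^m))) + (m*m*(2^m*3+Suc (2^m)+2)) + (cs m) + (m*1)) (Out2 n m ` {..<m})" by simp
    from slp_outs[OF this, of m "Out2 n m"] obtain P outs where
      P: "length P \<le> (2^m*n*1) + (2^m*1) + (m*1) + (1) + (2^m*2^m*(3*n+1)) + (2^m*2^m*1) + (2^m*2^m+5) + (2^m*2^m*4) + (3*(m*2^m)*3) + (2^m*Suc m) + (m*2^m*Suc m) + (2^m*(2^m*1+Suc (2^m))) + (2^m*1) + (2^m*(2^m*1+Suc (2^m))) + (m*(2^m*1+Suc (2^m)+2)) + (m*2) + (m*m*2^m*Suc m) + (m*2^m*(2^m*1+Suc (2^m))) + (m*m*2^m*(2^m*1+Suc (2^m))) + (m*m*(2^m*3+Suc (2^m)+2)) + (cs m) + (m*1)" "length outs = m" "\<forall>inp. run P outs inp = map (\<lambda>j. Out2 n m j inp) [0..<m]" by auto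
    have one: "1 \<le> (2::nat)^m" by simp
    have "length P \<le> 200 * (2^m * 2^m) * (n + m * m)"
      by (rule order.trans[OF P(1) costN[OF n one m_le mm_le]])
    then have "real (length P) \<le> real (200 * (2^m * 2^m) * (n + m * m))" by (rule of_nat_mono)
    then have L: "real (length P) \<le> 200 * (2^m)^2 * (real n + (real m)^2)" by (simp add: power2_eq_square)
    show "\<exists>P outs. real (length P) \<le> 200 * (2 ^ m)^2 * (real n + (real m)^2) \<and>
      length outs = m \<and>
      (\<forall>x r \<theta> \<eta>. (\<forall>t<2^m. r t = 1 \<or> r t = -1) \<longrightarrow>
         (\<forall>d. (\<forall>j<m. (\<Sum>k<m. hessL n m x r \<theta> j k * d k) = 0) \<longrightarrow> (\<forall>k<m. d k = 0)) \<longrightarrow>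
         (\<forall>j<m. (\<Sum>k<m. hessL n m x r \<theta> j k * (\<theta> k - run P outs (enc n m x r \<theta> \<eta>) ! k))
                 = gradL n m x r \<theta> j))"
    proof (intro exI[of _ P] exI[of _ outs] conjI L P(2) allI impI)
      fix x r \<theta> \<eta> j
      assume ns: "\<forall>d. (\<forall>j<m. (\<Sum>k<m. hessL n m x r \<theta> j k * d k) = 0) \<longrightarrow> (\<forall>k<m. d k = 0)"
        and j: "j < m"
      interpret a: agree n m x "xv n (enc n m x r \<theta> \<eta>)" r "rv n m (enc n m x r \<theta> \<eta>)" \<theta> "tv n m (enc n m x r \<theta> \<eta>)"
        by (rule agree_enc)
      define H where "H = (\<lambda>j k. Hs n m x r \<theta> j k)"
      define g where "g = (\<lambda>j. Gr n m x r \<theta> j)"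
      have Hf: "(\<lambda>i l. Hf n m i l (enc n m x r \<theta> \<eta>)) = H" unfolding Hf_def H_def by (simp add: a.Hsc)
      have Gf: "(\<lambda>i. Gf n m i (enc n m x r \<theta> \<eta>)) = g" unfolding Gf_def g_def by (simp add: a.Grc)
      have out: "\<theta> k - run P outs (enc n m x r \<theta> \<eta>) ! k = solve m H g k" if "k < m" for k
        using that unfolding P(3)[rule_format] by (simp add: Out2_def enc_t Hf Gf)
      have nsH: "nonsing m H" unfolding nonsing_def
      proof (intro allI impI)
        fix d l assume "\<forall>j<m. (\<Sum>k<m. H j k * d k) = 0" "l < m"
        then show "d l = 0" using ns unfolding H_def by (simp add: hessL_eq)
      qed
      have "(\<Sum>k<m. hessL n m x r \<theta> j k * (\<theta> k - run P outs (enc n m x r \<theta> \<eta>) ! k)) = (\<Sum>k<m. H j k * solve m H g k)"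
        using j by (intro sum.cong refl) (simp add: out hessL_eq H_def)
      also have "\<dots> = g j" by (rule solve_correct[OF nsH j])
      also have "\<dots> = gradL n m x r \<theta> j" unfolding g_def using gradL_eq[OF j] by simp
      finally show "(\<Sum>k<m. hessL n m x r \<theta> j k * (\<theta> k - run P outs (enc n m x r \<theta> \<eta>) ! k)) = gradL n m x r \<theta> j" .
    qed
  qed (simp)
qed


end
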